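(* Let $\Phi$ be of type $C_n$ and let $I$ be an abelian ideal. Then $I\in\mathcal I_{ab}(\alpha_n)$ if and only if $\alpha_{1,n}\in I$, where $\alpha_{1,n}=\alpha_1+\cdots+\alpha_n$.
   Context: $\Phi$ is the root system of type $C_n$ with simple roots $\alpha_1,\dots,\alpha_n$ numbered as in Bourbaki ($\alpha_n$ long), positive roots $\Phi^+$, highest root $\theta=2\alpha_1+\cdots+2\alpha_{n-1}+\alpha_n$, inner product $(-,-)$. The root poset is $\Phi^+$ with $\beta\ge\gamma$ iff $\beta-\gamma$ is a nonnegative integer combination of simple roots. An abelian ideal is a subset $I\subseteq\Phi^+$ closed upward in the root poset with $(I+I)\cap\Phi=\emptyset$. Affine setup: adjoin $\delta$ with the form extended to have kernel $\mathbb R\delta$; $\widehat\Phi=\Phi+\mathbb Z\delta$, $\widehat\Pi=\{\alpha_1,\dots,\alpha_n,-\theta+\delta\}$, $\widehat\Phi^+=\Phi^+\cup(\Phi+\mathbb Z_{>0}\delta)$, $\widehat W$ generated by reflections $s_\gamma(x)=x-\frac{2(x,\gamma)}{(\gamma,\gamma)}\gamma$, $\gamma\in\widehat\Pi$; $N(w)=\{\beta\in\widehat\Phi^+\mid w^{-1}(\beta)\in-\widehat\Phi^+\}$. For an abelian ideal $I$, $w_I$ is the unique element of $\widehat W$ with $N(w_I)=\{-\beta+\delta\mid\beta\in I\}$; for a long root $\alpha\in\Phi^+$, $\mathcal I_{ab}(\alpha)=\{I\mid w_I^{-1}(-\theta+2\delta)=\alpha\}$. *)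

theory Defs
  imports Complex_Main
begin

text \<open>Vectors of the ambient Euclidean space R^n are functions nat => real,
  coordinates indexed by 1..n (all other coordinates are 0 for every vector that occurs).\<close>

type_synonym vec = "nat \<Rightarrow> real"

definition ev :: "nat \<Rightarrow> vec" where
  "ev i = (\<lambda>j. if j = i then 1 else 0)"

definition vadd :: "vec \<Rightarrow> vec \<Rightarrow> vec" where
  "vadd v w = (\<lambda>j. v j + w j)"

definition vsub :: "vec \<Rightarrow> vec \<Rightarrow> vec" where
  "vsub v w = (\<lambda>j. v j - w j)"

definition vneg :: "vec \<Rightarrow> vec" where
  "vneg v = (\<lambda>j. - v j)"

definition vscale :: "real \<Rightarrow> vec \<Rightarrow> vec" where
  "vscale c v = (\<lambda>j. c * v j)"

definition inner_C :: "nat \<Rightarrow> vec \<Rightarrow> vec \<Rightarrow> real" where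
  "inner_C n v w = (\<Sum>j\<in>{1..n}. v j * w j)"

definition roots_C :: "nat \<Rightarrow> vec set" where
  "roots_C n =
     {vsub (ev i) (ev j) | i j. i \<in> {1..n} \<and> j \<in> {1..n} \<and> i \<noteq> j}
   \<union> {vadd (ev i) (ev j) | i j. i \<in> {1..n} \<and> j \<in> {1..n} \<and> i \<noteq> j}
   \<union> {vneg (vadd (ev i) (ev j)) | i j. i \<in> {1..n} \<and> j \<in> {1..n} \<and> i \<noteq> j}
   \<union> {vscale 2 (ev i) | i. i \<in> {1..n}}
   \<union> {vscale (-2) (ev i) | i. i \<in> {1..n}}"

definition simple_root :: "nat \<Rightarrow> nat \<Rightarrow> vec" where
  "simple_root n i = (if i < n then vsub (ev i) (ev (Suc i)) else vscale 2 (ev n))"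

definition pos_roots_C :: "nat \<Rightarrow> vec set" where
  "pos_roots_C n =
     {vsub (ev i) (ev j) | i j. 1 \<le> i \<and> i < j \<and> j \<le> n}
   \<union> {vadd (ev i) (ev j) | i j. 1 \<le> i \<and> i < j \<and> j \<le> n}
   \<union> {vscale 2 (ev i) | i. i \<in> {1..n}}"

text \<open>Highest root theta = 2 alpha_1 + ... + 2 alpha_(n-1) + alpha_n = 2 e_1.\<close>
definition theta_C :: "nat \<Rightarrow> vec" where
  "theta_C n = (\<lambda>j. (\<Sum>i\<in>{1..<n}. 2 * simple_root n i j) + simple_root n n j)"

definition alpha_1n :: "nat \<Rightarrow> vec" where
  "alpha_1n n = (\<lambda>j. \<Sum>i\<in>{1..n}. simple_root n i j)"

definition root_ge :: "nat \<Rightarrow> vec \<Rightarrow> vec \<Rightarrow> bool" where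
  "root_ge n \<beta> \<gamma> \<longleftrightarrow>
     (\<exists>c :: nat \<Rightarrow> nat. vsub \<beta> \<gamma> = (\<lambda>j. \<Sum>i\<in>{1..n}. real (c i) * simple_root n i j))"

definition abelian_ideal :: "nat \<Rightarrow> vec set \<Rightarrow> bool" where
  "abelian_ideal n I \<longleftrightarrow>
     I \<subseteq> pos_roots_C n
   \<and> (\<forall>\<beta>\<in>I. \<forall>\<gamma>\<in>pos_roots_C n. root_ge n \<gamma> \<beta> \<longrightarrow> \<gamma> \<in> I)
   \<and> (\<forall>\<beta>\<in>I. \<forall>\<gamma>\<in>I. vadd \<beta> \<gamma> \<notin> roots_C n)"

text \<open>An element of V + R delta is a pair (v, c) standing for v + c delta.
  The form is extended with kernel R delta.\<close>
type_synonym avec = "vec \<times> real"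

definition aform :: "nat \<Rightarrow> avec \<Rightarrow> avec \<Rightarrow> real" where
  "aform n x y = inner_C n (fst x) (fst y)"

definition aneg :: "avec \<Rightarrow> avec" where
  "aneg x = (vneg (fst x), - snd x)"

definition areflect :: "nat \<Rightarrow> avec \<Rightarrow> avec \<Rightarrow> avec" where
  "areflect n \<gamma> x =
     (let c = 2 * aform n x \<gamma> / aform n \<gamma> \<gamma>
      in (vsub (fst x) (vscale c (fst \<gamma>)), snd x - c * snd \<gamma>))"

definition aff_roots :: "nat \<Rightarrow> avec set" where
  "aff_roots n = {(\<beta>, real_of_int k) | \<beta> k. \<beta> \<in> roots_C n}"

definition aff_pos_roots :: "nat \<Rightarrow> avec set" where
  "aff_pos_roots n = {(\<beta>, 0) | \<beta>. \<beta> \<in> pos_roots_C n}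
     \<union> {(\<beta>, real_of_int k) | \<beta> k. \<beta> \<in> roots_C n \<and> k > 0}"

definition aff_simple_roots :: "nat \<Rightarrow> avec set" where
  "aff_simple_roots n = {(simple_root n i, 0) | i. i \<in> {1..n}} \<union> {(vneg (theta_C n), 1)}"

inductive_set aff_weyl :: "nat \<Rightarrow> (avec \<Rightarrow> avec) set" for n where
  id_in: "id \<in> aff_weyl n"
| refl_comp: "w \<in> aff_weyl n \<Longrightarrow> \<gamma> \<in> aff_simple_roots n \<Longrightarrow> areflect n \<gamma> \<circ> w \<in> aff_weyl n"

definition inv_set :: "nat \<Rightarrow> (avec \<Rightarrow> avec) \<Rightarrow> avec set" where
  "inv_set n w = {\<beta> \<in> aff_pos_roots n. inv w \<beta> \<in> aneg ` aff_pos_roots n}"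

definition w_ideal :: "nat \<Rightarrow> vec set \<Rightarrow> (avec \<Rightarrow> avec)" where
  "w_ideal n I = (THE w. w \<in> aff_weyl n \<and> inv_set n w = {(vneg \<beta>, 1) | \<beta>. \<beta> \<in> I})"

definition I_ab :: "nat \<Rightarrow> vec \<Rightarrow> vec set set" where
  "I_ab n \<alpha> = {I. abelian_ideal n I \<and> inv (w_ideal n I) (vneg (theta_C n), 2) = (\<alpha>, 0)}"

end

theory Submission
  imports Defs
begin


definition sv :: "real \<Rightarrow> nat \<Rightarrow> real \<Rightarrow> nat \<Rightarrow> vec" where
  "sv a k b l = vadd (vscale a (ev k)) (vscale b (ev l))"

definition wt :: "nat \<Rightarrow> nat \<Rightarrow> real" where "wt n k = real n + 1 - real k"

definition hpos :: "nat \<Rightarrow> vec \<Rightarrow> real" where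
  "hpos n x = (\<Sum>t\<in>{1..n}. wt n t * x t)"

lemma sv_app: "sv a k b l t = (if t = k then a else 0) + (if t = l then b else 0)"
  by (simp add: sv_def vadd_def vscale_def ev_def)

lemma sum_ind: "(k::nat) \<in> {1..n} \<Longrightarrow> (\<Sum>t\<in>{1..n}. f t * (if t = k then a else 0)) = f k * (a::real)"
proof -
  assume k: "k \<in> {1..n}"
  have "(\<Sum>t\<in>{1..n}. f t * (if t = k then a else 0)) = (\<Sum>t\<in>{1..n}. if t = k then f t * a else 0)"
    by (rule sum.cong) auto
  also have "\<dots> = f k * a" using k by (subst sum.delta) auto
  finally show ?thesis .
qed

lemma hpos_sv: "k \<in> {1..n} \<Longrightarrow> l \<in> {1..n} \<Longrightarrow> hpos n (sv a k b l) = a * wt n k + b * wt n l"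
proof -
  assume k: "k \<in> {1..n}" and l: "l \<in> {1..n}"
  have "hpos n (sv a k b l) = (\<Sum>t\<in>{1..n}. wt n t * (if t = k then a else 0)) + (\<Sum>t\<in>{1..n}. wt n t * (if t = l then b else 0))"
    unfolding hpos_def sv_app by (simp add: distrib_left sum.distrib)
  also have "\<dots> = a * wt n k + b * wt n l" using sum_ind[OF k, of "wt n" a] sum_ind[OF l, of "wt n" b] by simp
  finally show ?thesis .
qed

lemma hpos_vneg: "hpos n (vneg x) = - hpos n x"
  unfolding hpos_def vneg_def by (simp add: sum_negf)

lemma roots_char: "roots_C n = {sv a k b l | a k b l. (a = 1 \<or> a = -1) \<and> (b = 1 \<or> b = -1) \<and>
   k \<in> {1..n} \<and> l \<in> {1..n} \<and> (k = l \<longrightarrow> a = b)}" (is "_ = ?R")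
proof
  show "roots_C n \<subseteq> ?R"
  proof
    fix x assume "x \<in> roots_C n"
    then consider (a) i j where "x = vsub (ev i) (ev j)" "i \<in> {1..n}" "j \<in> {1..n}" "i \<noteq> j"
      | (b) i j where "x = vadd (ev i) (ev j)" "i \<in> {1..n}" "j \<in> {1..n}" "i \<noteq> j"
      | (c) i j where "x = vneg (vadd (ev i) (ev j))" "i \<in> {1..n}" "j \<in> {1..n}" "i \<noteq> j"
      | (d) i where "x = vscale 2 (ev i)" "i \<in> {1..n}"
      | (e) i where "x = vscale (-2) (ev i)" "i \<in> {1..n}"
      unfolding roots_C_def by blast
    then show "x \<in> ?R"
    proof cases
      case a then have "x = sv 1 i (-1) j" by (auto simp: fun_eq_iff sv_app vsub_def ev_def)
      with a show ?thesis by blast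
    next
      case b then have "x = sv 1 i 1 j" by (auto simp: fun_eq_iff sv_app vadd_def ev_def)
      with b show ?thesis by blast
    next
      case c then have "x = sv (-1) i (-1) j" by (auto simp: fun_eq_iff sv_app vadd_def vneg_def ev_def)
      with c show ?thesis by blast
    next
      case d then have "x = sv 1 i 1 i" by (auto simp: fun_eq_iff sv_app vscale_def ev_def)
      with d show ?thesis by blast
    next
      case e then have "x = sv (-1) i (-1) i" by (auto simp: fun_eq_iff sv_app vscale_def ev_def)
      with e show ?thesis by blast
    qed
  qed
next
  show "?R \<subseteq> roots_C n"
  proof
    fix x assume "x \<in> ?R"
    then obtain a k b l where x: "x = sv a k b l" "a = 1 \<or> a = -1" "b = 1 \<or> b = -1"
      "k \<in> {1..n}" "l \<in> {1..n}" "k = l \<longrightarrow> a = b" by blast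
    show "x \<in> roots_C n"
    proof (cases "k = l")
      case True
      then have "a = b" using x by auto
      show ?thesis
      proof (cases "a = 1")
        case True
        then have "x = vscale 2 (ev k)" using x \<open>a = b\<close> \<open>k = l\<close> by (auto simp: fun_eq_iff sv_app vscale_def ev_def)
        then show ?thesis using x unfolding roots_C_def by blast
      next
        case False
        then have "x = vscale (-2) (ev k)" using x \<open>a = b\<close> \<open>k = l\<close> by (auto simp: fun_eq_iff sv_app vscale_def ev_def)
        then show ?thesis using x unfolding roots_C_def by blast
      qed
    next
      case False
      from x(2,3) consider "a = 1" "b = 1" | "a = 1" "b = -1" | "a = -1" "b = 1" | "a = -1" "b = -1" by blast
      then show ?thesis
      proof cases
        case 1 then have "x = vadd (ev k) (ev l)" using x by (auto simp: fun_eq_iff sv_app vadd_def ev_def)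
        then show ?thesis using x False unfolding roots_C_def by blast
      next
        case 2 then have "x = vsub (ev k) (ev l)" using x by (auto simp: fun_eq_iff sv_app vsub_def ev_def)
        then show ?thesis using x False unfolding roots_C_def by blast
      next
        case 3 then have "x = vsub (ev l) (ev k)" using x by (auto simp: fun_eq_iff sv_app vsub_def ev_def)
        then show ?thesis using x False unfolding roots_C_def by blast
      next
        case 4 then have "x = vneg (vadd (ev k) (ev l))" using x by (auto simp: fun_eq_iff sv_app vadd_def vneg_def ev_def)
        then show ?thesis using x False unfolding roots_C_def by blast
      qed
    qed
  qed
qed



lemma wt_pos: "k \<in> {1..n} \<Longrightarrow> wt n k > 0" by (auto simp: wt_def)

lemma sv_in_roots: "(a = 1 \<or> a = -1) \<Longrightarrow> (b = 1 \<or> b = -1) \<Longrightarrow> k \<in> {1..n} \<Longrightarrow> l \<in> {1..n}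
  \<Longrightarrow> (k = l \<longrightarrow> a = b) \<Longrightarrow> sv a k b l \<in> roots_C n"
  unfolding roots_char by blast

lemma pos_char: "pos_roots_C n = {x \<in> roots_C n. hpos n x > 0}" (is "_ = ?R")
proof
  show "pos_roots_C n \<subseteq> ?R"
  proof
    fix x assume "x \<in> pos_roots_C n"
    then consider (a) i j where "x = vsub (ev i) (ev j)" "1 \<le> i" "i < j" "j \<le> n"
      | (b) i j where "x = vadd (ev i) (ev j)" "1 \<le> i" "i < j" "j \<le> n"
      | (d) i where "x = vscale 2 (ev i)" "i \<in> {1..n}"
      unfolding pos_roots_C_def by blast
    then show "x \<in> ?R"
    proof cases
      case a then have "x = sv 1 i (-1) j" by (auto simp: fun_eq_iff sv_app vsub_def ev_def)
      moreover have "hpos n (sv 1 i (-1) j) > 0" using a by (simp add: hpos_sv wt_def)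
      ultimately show ?thesis using a sv_in_roots[of 1 "-1" i n j] by auto
    next
      case b then have "x = sv 1 i 1 j" by (auto simp: fun_eq_iff sv_app vadd_def ev_def)
      moreover have "hpos n (sv 1 i 1 j) > 0" using b by (simp add: hpos_sv wt_def)
      ultimately show ?thesis using b sv_in_roots[of 1 1 i n j] by auto
    next
      case d then have "x = sv 1 i 1 i" by (auto simp: fun_eq_iff sv_app vscale_def ev_def)
      moreover have "hpos n (sv 1 i 1 i) > 0" using d by (simp add: hpos_sv wt_def)
      ultimately show ?thesis using d sv_in_roots[of 1 1 i n i] by auto
    qed
  qed
next
  show "?R \<subseteq> pos_roots_C n"
  proof
    fix x assume "x \<in> ?R"
    then obtain a k b l where x: "x = sv a k b l" "a = 1 \<or> a = -1" "b = 1 \<or> b = -1"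
      "k \<in> {1..n}" "l \<in> {1..n}" "k = l \<longrightarrow> a = b" and h: "hpos n x > 0"
      unfolding roots_char by blast
    have h2: "a * wt n k + b * wt n l > 0" using h x by (simp add: hpos_sv)
    from x(2,3) consider "a = 1" "b = 1" | "a = 1" "b = -1" | "a = -1" "b = 1" | "a = -1" "b = -1" by blast
    then show "x \<in> pos_roots_C n"
    proof cases
      case 1
      consider "k < l" | "k = l" | "l < k" by linarith
      then show ?thesis
      proof cases
        case 1 then have "x = vadd (ev k) (ev l)" using x \<open>a=1\<close> \<open>b=1\<close> by (auto simp: fun_eq_iff sv_app vadd_def ev_def)
        then show ?thesis using x 1 unfolding pos_roots_C_def by auto
      next
        case 2 then have "x = vscale 2 (ev k)" using x \<open>a=1\<close> \<open>b=1\<close> by (auto simp: fun_eq_iff sv_app vscale_def ev_def)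
        then show ?thesis using x 2 unfolding pos_roots_C_def by auto
      next
        case 3 then have "x = vadd (ev l) (ev k)" using x \<open>a=1\<close> \<open>b=1\<close> by (auto simp: fun_eq_iff sv_app vadd_def ev_def)
        then show ?thesis using x 3 unfolding pos_roots_C_def by auto
      qed
    next
      case 2
      then have "k < l" using h2 x by (auto simp: wt_def)
      then have "x = vsub (ev k) (ev l)" using x 2 by (auto simp: fun_eq_iff sv_app vsub_def ev_def)
      then show ?thesis using x \<open>k < l\<close> unfolding pos_roots_C_def by auto
    next
      case 3
      then have "l < k" using h2 x by (auto simp: wt_def)
      then have "x = vsub (ev l) (ev k)" using x 3 by (auto simp: fun_eq_iff sv_app vsub_def ev_def)
      then show ?thesis using x \<open>l < k\<close> unfolding pos_roots_C_def by auto
    next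
      case 4
      then have False using h2 wt_pos[OF x(4)] wt_pos[OF x(5)] by simp
      then show ?thesis ..
    qed
  qed
qed

lemma roots_vneg: "x \<in> roots_C n \<Longrightarrow> vneg x \<in> roots_C n"
proof -
  assume "x \<in> roots_C n"
  then obtain a k b l where x: "x = sv a k b l" "a = 1 \<or> a = -1" "b = 1 \<or> b = -1"
      "k \<in> {1..n}" "l \<in> {1..n}" "k = l \<longrightarrow> a = b" unfolding roots_char by blast
  have "vneg x = sv (-a) k (-b) l" using x by (auto simp: fun_eq_iff sv_app vneg_def)
  then show ?thesis using x sv_in_roots[of "-a" "-b" k n l] by auto
qed

lemma roots_hpos_nz: "x \<in> roots_C n \<Longrightarrow> hpos n x \<noteq> 0"
proof -
  assume "x \<in> roots_C n"
  then obtain a k b l where x: "x = sv a k b l" "a = 1 \<or> a = -1" "b = 1 \<or> b = -1"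
      "k \<in> {1..n}" "l \<in> {1..n}" "k = l \<longrightarrow> a = b" unfolding roots_char by blast
  show ?thesis using x wt_pos[OF x(4)] wt_pos[OF x(5)] by (auto simp: hpos_sv wt_def)
qed

lemma roots_int: "x \<in> roots_C n \<Longrightarrow> x t \<in> \<int>"
  unfolding roots_char by (auto simp: sv_app)

lemma affpos_char: "(x, c) \<in> aff_pos_roots n \<longleftrightarrow> x \<in> roots_C n \<and> c \<in> \<int> \<and> (c > 0 \<or> (c = 0 \<and> hpos n x > 0))"
proof
  assume "(x, c) \<in> aff_pos_roots n"
  then show "x \<in> roots_C n \<and> c \<in> \<int> \<and> (c > 0 \<or> (c = 0 \<and> hpos n x > 0))"
    unfolding aff_pos_roots_def pos_char by auto
next
  assume a: "x \<in> roots_C n \<and> c \<in> \<int> \<and> (c > 0 \<or> (c = 0 \<and> hpos n x > 0))"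
  show "(x, c) \<in> aff_pos_roots n"
  proof (cases "c > 0")
    case True
    from a obtain k where k: "c = of_int k" by (auto elim: Ints_cases)
    with True have "k > 0" by simp
    then show ?thesis using a k unfolding aff_pos_roots_def by blast
  next
    case False
    then have "c = 0" "hpos n x > 0" using a by auto
    then show ?thesis using a unfolding aff_pos_roots_def pos_char by blast
  qed
qed

lemma affroots_char: "(x, c) \<in> aff_roots n \<longleftrightarrow> x \<in> roots_C n \<and> c \<in> \<int>"
  unfolding aff_roots_def by (auto elim: Ints_cases)

lemma aneg_aneg[simp]: "aneg (aneg x) = x" by (simp add: aneg_def vneg_def)

lemma aneg_image: "x \<in> aneg ` S \<longleftrightarrow> aneg x \<in> S"
  by (metis aneg_aneg image_iff)

lemma affroots_split: "z \<in> aff_roots n \<Longrightarrow> (z \<in> aff_pos_roots n \<longleftrightarrow> aneg z \<notin> aff_pos_roots n)"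
proof -
  assume z: "z \<in> aff_roots n"
  obtain x c where zc: "z = (x, c)" by fastforce
  have x: "x \<in> roots_C n" "c \<in> \<int>" using z zc affroots_char by auto
  have "aneg z = (vneg x, - c)" using zc by (simp add: aneg_def)
  then show ?thesis using x roots_vneg[OF x(1)] roots_hpos_nz[OF x(1)] zc
    by (auto simp: affpos_char hpos_vneg)
qed

lemma affpos_roots: "z \<in> aff_pos_roots n \<Longrightarrow> z \<in> aff_roots n"
  by (metis affpos_char affroots_char surj_pair)



definition Av :: "nat \<Rightarrow> (nat \<Rightarrow> nat) \<Rightarrow> (nat \<Rightarrow> real) \<Rightarrow> vec \<Rightarrow> vec" where
  "Av n \<rho> s x = (\<lambda>t. if t \<in> {1..n} then (\<Sum>i\<in>{1..n}. if \<rho> i = t then s i * x i else 0) else x t)"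

definition Lf :: "nat \<Rightarrow> (nat \<Rightarrow> real) \<Rightarrow> vec \<Rightarrow> real" where
  "Lf n m x = (\<Sum>i\<in>{1..n}. m i * x i)"

definition Fm :: "nat \<Rightarrow> (nat \<Rightarrow> nat) \<Rightarrow> (nat \<Rightarrow> real) \<Rightarrow> (nat \<Rightarrow> real) \<Rightarrow> avec \<Rightarrow> avec" where
  "Fm n \<rho> s m = (\<lambda>z. (Av n \<rho> s (fst z), snd z + Lf n m (fst z)))"

definition goodF :: "nat \<Rightarrow> (nat \<Rightarrow> nat) \<Rightarrow> (nat \<Rightarrow> real) \<Rightarrow> (nat \<Rightarrow> real) \<Rightarrow> bool" where
  "goodF n \<rho> s m \<longleftrightarrow> bij_betw \<rho> {1..n} {1..n} \<and> (\<forall>i\<in>{1..n}. s i = 1 \<or> s i = -1) \<and> (\<forall>i\<in>{1..n}. m i \<in> \<int>)"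

lemma sum_delta_nat: "(k::nat) \<in> {1..n} \<Longrightarrow> (\<Sum>i\<in>{1..n}. if i = k then f i else 0) = (f k :: real)"
  by (subst sum.delta) auto

lemma Av_sv:
  assumes k: "k \<in> {1..n}" and l: "l \<in> {1..n}" and r: "\<rho> ` {1..n} \<subseteq> {1..n}"
  shows "Av n \<rho> s (sv a k b l) = sv (a * s k) (\<rho> k) (b * s l) (\<rho> l)"
proof (rule ext)
  fix t
  have rk: "\<rho> k \<in> {1..n}" "\<rho> l \<in> {1..n}" using r k l by (auto simp del: atLeastAtMost_iff simp: image_subset_iff)
  show "Av n \<rho> s (sv a k b l) t = sv (a * s k) (\<rho> k) (b * s l) (\<rho> l) t"
  proof (cases "t \<in> {1..n}")
    case True
    have "(\<Sum>i\<in>{1..n}. if \<rho> i = t then s i * sv a k b l i else 0)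
      = (\<Sum>i\<in>{1..n}. (if i = k then (if \<rho> i = t then s i * a else 0) else 0)
                     + (if i = l then (if \<rho> i = t then s i * b else 0) else 0))"
      by (rule sum.cong) (auto simp: sv_app algebra_simps)
    also have "\<dots> = (if \<rho> k = t then s k * a else 0) + (if \<rho> l = t then s l * b else 0)"
      unfolding sum.distrib
      using sum_delta_nat[OF k, of "\<lambda>i. if \<rho> i = t then s i * a else 0"]
        sum_delta_nat[OF l, of "\<lambda>i. if \<rho> i = t then s i * b else 0"] by simp
    finally show ?thesis using True by (simp add: Av_def sv_app algebra_simps)
  next
    case False
    then show ?thesis using k l rk by (auto simp: Av_def sv_app)
  qed
qed

lemma Lf_sv: "k \<in> {1..n} \<Longrightarrow> l \<in> {1..n} \<Longrightarrow> Lf n m (sv a k b l) = a * m k + b * m l"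
proof -
  assume k: "k \<in> {1..n}" and l: "l \<in> {1..n}"
  have "Lf n m (sv a k b l) = (\<Sum>t\<in>{1..n}. m t * (if t = k then a else 0)) + (\<Sum>t\<in>{1..n}. m t * (if t = l then b else 0))"
    unfolding Lf_def sv_app by (simp add: distrib_left sum.distrib)
  also have "\<dots> = a * m k + b * m l" using sum_ind[OF k, of m a] sum_ind[OF l, of m b] by simp
  finally show ?thesis .
qed

lemma Av_vneg: "Av n \<rho> s (vneg x) = vneg (Av n \<rho> s x)"
  by (auto simp: fun_eq_iff Av_def vneg_def sum_negf[symmetric] intro!: sum.cong)

lemma Lf_vneg: "Lf n m (vneg x) = - Lf n m x"
  by (simp add: Lf_def vneg_def sum_negf[symmetric])

lemma Fm_aneg: "Fm n \<rho> s m (aneg z) = aneg (Fm n \<rho> s m z)"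
  by (simp add: Fm_def aneg_def Av_vneg Lf_vneg)

lemma goodF_img: "goodF n \<rho> s m \<Longrightarrow> \<rho> ` {1..n} \<subseteq> {1..n}"
  unfolding goodF_def bij_betw_def by auto

lemma Fm_sv:
  assumes "goodF n \<rho> s m" "k \<in> {1..n}" "l \<in> {1..n}"
  shows "Fm n \<rho> s m (sv a k b l, c) = (sv (a * s k) (\<rho> k) (b * s l) (\<rho> l), c + a * m k + b * m l)"
  using assms goodF_img[OF assms(1)] by (simp add: Fm_def Av_sv Lf_sv)

lemma Fm_roots:
  assumes g: "goodF n \<rho> s m" and z: "z \<in> aff_roots n"
  shows "Fm n \<rho> s m z \<in> aff_roots n"
proof -
  obtain x c where zc: "z = (x, c)" by fastforce
  have x: "x \<in> roots_C n" "c \<in> \<int>" using z zc affroots_char by auto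
  then obtain a k b l where xs: "x = sv a k b l" "a = 1 \<or> a = -1" "b = 1 \<or> b = -1"
      "k \<in> {1..n}" "l \<in> {1..n}" "k = l \<longrightarrow> a = b" unfolding roots_char by blast
  have inj: "inj_on \<rho> {1..n}" and sg: "\<forall>i\<in>{1..n}. s i = 1 \<or> s i = -1" and mi: "\<forall>i\<in>{1..n}. m i \<in> \<int>"
    using g unfolding goodF_def bij_betw_def by auto
  have r: "\<rho> k \<in> {1..n}" "\<rho> l \<in> {1..n}" using goodF_img[OF g] xs(4,5) by (auto simp del: atLeastAtMost_iff simp: image_subset_iff)
  have eq: "\<rho> k = \<rho> l \<longrightarrow> k = l" using inj xs(4,5) by (auto dest: inj_onD)
  have "sv (a * s k) (\<rho> k) (b * s l) (\<rho> l) \<in> roots_C n"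
    apply (rule sv_in_roots)
    using xs sg r eq by auto
  moreover have "c + a * m k + b * m l \<in> \<int>" using x xs mi by auto
  ultimately show ?thesis using zc xs Fm_sv[OF g xs(4,5)] affroots_char by auto
qed



lemma telescope:
  assumes "1 \<le> a" "a \<le> b" "b \<le> n"
  shows "(\<lambda>t. \<Sum>k\<in>{a..<b}. simple_root n k t) = vsub (ev a) (ev b)"
  using assms
proof (induction b)
  case 0
  then show ?case by simp
next
  case (Suc b)
  show ?case
  proof (cases "a = Suc b")
    case True
    then show ?thesis by (auto simp: fun_eq_iff vsub_def)
  next
    case False
    then have ab: "a \<le> b" using Suc by simp
    then have IH: "(\<lambda>t. \<Sum>k\<in>{a..<b}. simple_root n k t) = vsub (ev a) (ev b)" using Suc by simp
    have "b < n" using Suc by simp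
    show ?thesis
    proof (rule ext)
      fix t
      have "(\<Sum>k\<in>{a..<Suc b}. simple_root n k t) = (\<Sum>k\<in>{a..<b}. simple_root n k t) + simple_root n b t"
        using ab by simp
      also have "\<dots> = vsub (ev a) (ev b) t + simple_root n b t" using IH by (metis)
      finally show "(\<Sum>k\<in>{a..<Suc b}. simple_root n k t) = vsub (ev a) (ev (Suc b)) t"
        using \<open>b < n\<close> by (simp add: simple_root_def vsub_def)
    qed
  qed
qed

lemma theta_eq: "n \<ge> 1 \<Longrightarrow> theta_C n = vscale 2 (ev 1)"
proof -
  assume n: "n \<ge> 1"
  show ?thesis
  proof (rule ext)
    fix t
    have "theta_C n t = 2 * (\<Sum>i\<in>{1..<n}. simple_root n i t) + simple_root n n t"
      unfolding theta_C_def by (simp add: sum_distrib_left)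
    also have "\<dots> = 2 * vsub (ev 1) (ev n) t + simple_root n n t"
      using fun_cong[OF telescope[of 1 n n], of t] n by simp
    finally show "theta_C n t = vscale 2 (ev 1) t"
      by (simp add: simple_root_def vsub_def vscale_def ev_def)
  qed
qed

lemma alpha1n_eq: "n \<ge> 1 \<Longrightarrow> alpha_1n n = sv 1 1 1 n"
proof -
  assume n: "n \<ge> 1"
  show ?thesis
  proof (rule ext)
    fix t
    have "alpha_1n n t = (\<Sum>i\<in>{1..<n}. simple_root n i t) + simple_root n n t"
      unfolding alpha_1n_def using n by (metis One_nat_def Suc_le_eq atLeastLessThanSuc_atLeastAtMost sum.atLeastLessThan_Suc)
    also have "\<dots> = vsub (ev 1) (ev n) t + simple_root n n t"
      using fun_cong[OF telescope[of 1 n n], of t] n by simp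
    finally show "alpha_1n n t = sv 1 1 1 n t"
      by (simp add: simple_root_def vsub_def vscale_def ev_def sv_app)
  qed
qed

lemma inner_ev: "k \<in> {1..n} \<Longrightarrow> inner_C n y (ev k) = y k"
  unfolding inner_C_def ev_def using sum_ind[of k n y 1] by simp

lemma inner_vsub: "inner_C n y (vsub u v) = inner_C n y u - inner_C n y v"
  by (simp add: inner_C_def vsub_def algebra_simps sum_subtractf)
lemma inner_vscale: "inner_C n y (vscale c u) = c * inner_C n y u"
  by (simp add: inner_C_def vscale_def algebra_simps sum_distrib_left)
lemma inner_vneg: "inner_C n y (vneg u) = - inner_C n y u"
  by (simp add: inner_C_def vneg_def sum_negf)

lemma areflect_eq: "areflect n (g, d) (y, c) =
   (let q = 2 * inner_C n y g / inner_C n g g in (vsub y (vscale q g), c - q * d))"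
  by (simp add: areflect_def aform_def)

definition tau :: "nat \<Rightarrow> nat \<Rightarrow> nat" where
  "tau k t = (if t = k then Suc k else if t = Suc k then k else t)"

lemma tau_tau[simp]: "tau k (tau k t) = t" by (simp add: tau_def)
lemma tau_eq: "tau k u = t \<longleftrightarrow> u = tau k t" by (auto simp: tau_def)

lemma refl_swap:
  assumes "1 \<le> k" "k < n"
  shows "areflect n (simple_root n k, 0) (y, c) = ((\<lambda>t. y (tau k t)), c)"
proof -
  have sr: "simple_root n k = vsub (ev k) (ev (Suc k))" using assms by (simp add: simple_root_def)
  have i1: "inner_C n y (simple_root n k) = y k - y (Suc k)"
    using assms by (simp add: sr inner_vsub inner_ev)
  have i2: "inner_C n (simple_root n k) (simple_root n k) = 2"
    using assms apply (simp add: sr inner_vsub inner_ev) by (simp add: vsub_def ev_def)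
  show ?thesis using assms unfolding areflect_eq i1 i2
    by (auto simp: fun_eq_iff sr vsub_def vscale_def ev_def tau_def Let_def field_simps)
qed

lemma refl_n:
  assumes "1 \<le> n"
  shows "areflect n (simple_root n n, 0) (y, c) = ((\<lambda>t. if t = n then - y t else y t), c)"
proof -
  have sr: "simple_root n n = vscale 2 (ev n)" by (simp add: simple_root_def)
  have i1: "inner_C n y (simple_root n n) = 2 * y n"
    using assms by (simp add: sr inner_vscale inner_ev)
  have i2: "inner_C n (simple_root n n) (simple_root n n) = 4"
    using assms apply (simp add: sr inner_vscale inner_ev) by (simp add: vscale_def ev_def)
  show ?thesis using assms unfolding areflect_eq i1 i2
    by (auto simp: fun_eq_iff sr vsub_def vscale_def ev_def Let_def)
qed

lemma refl_0:
  assumes "1 \<le> n"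
  shows "areflect n (vneg (theta_C n), 1) (y, c) = ((\<lambda>t. if t = 1 then - y t else y t), c + y 1)"
proof -
  have sr: "theta_C n = vscale 2 (ev 1)" using theta_eq assms by simp
  have i1: "inner_C n y (vneg (theta_C n)) = - 2 * y 1"
    using assms by (simp add: sr inner_vscale inner_ev inner_vneg)
  have i2: "inner_C n (vneg (theta_C n)) (vneg (theta_C n)) = 4"
    using assms apply (simp add: sr inner_vscale inner_ev inner_vneg) by (simp add: vscale_def ev_def vneg_def)
  show ?thesis using assms unfolding areflect_eq i1 i2
    by (auto simp: fun_eq_iff sr vsub_def vscale_def ev_def Let_def vneg_def)
qed

lemma simple_roots_cases:
  assumes "\<gamma> \<in> aff_simple_roots n"
  obtains (sw) k where "1 \<le> k" "k < n" "\<gamma> = (simple_root n k, 0)"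
    | (nn) "\<gamma> = (simple_root n n, 0)" "1 \<le> n"
    | (z) "\<gamma> = (vneg (theta_C n), 1)"
  using assms unfolding aff_simple_roots_def by (auto simp: not_less) (metis le_antisym not_less)



lemma Av_tau:
  assumes "1 \<le> k" "Suc k \<le> n"
  shows "Av n (tau k \<circ> \<rho>) s x = (\<lambda>t. Av n \<rho> s x (tau k t))"
proof (rule ext)
  fix t
  show "Av n (tau k \<circ> \<rho>) s x t = Av n \<rho> s x (tau k t)"
  proof (cases "t \<in> {1..n}")
    case True
    then have tk: "tau k t \<in> {1..n}" using assms by (auto simp: tau_def)
    have "Av n (tau k \<circ> \<rho>) s x t = (\<Sum>i\<in>{1..n}. if tau k (\<rho> i) = t then s i * x i else 0)"
      using True by (simp add: Av_def)
    also have "\<dots> = (\<Sum>i\<in>{1..n}. if \<rho> i = tau k t then s i * x i else 0)"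
      by (rule sum.cong) (auto simp: tau_eq)
    also have "\<dots> = Av n \<rho> s x (tau k t)" using tk by (simp add: Av_def)
    finally show ?thesis .
  next
    case False
    then have tt: "tau k t = t" using assms by (auto simp: tau_def)
    show ?thesis by (simp only: Av_def tt if_not_P[OF False])
  qed
qed

lemma comp_sw:
  assumes "1 \<le> k" "k < n"
  shows "areflect n (simple_root n k, 0) (Fm n \<rho> s m z) = Fm n (tau k \<circ> \<rho>) s m z"
  using assms by (simp add: Fm_def refl_swap Av_tau)

lemma comp_n:
  assumes "1 \<le> n"
  shows "areflect n (simple_root n n, 0) (Fm n \<rho> s m z) = Fm n \<rho> (\<lambda>i. if \<rho> i = n then - s i else s i) m z"
proof -
  have "(\<lambda>t. if t = n then - Av n \<rho> s x t else Av n \<rho> s x t) = Av n \<rho> (\<lambda>i. if \<rho> i = n then - s i else s i) x" for x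
    using assms by (auto simp: fun_eq_iff Av_def sum_negf[symmetric] intro!: sum.cong)
  then show ?thesis using assms by (simp add: Fm_def refl_n)
qed

lemma comp_0:
  assumes "1 \<le> n"
  shows "areflect n (vneg (theta_C n), 1) (Fm n \<rho> s m z) =
    Fm n \<rho> (\<lambda>i. if \<rho> i = 1 then - s i else s i) (\<lambda>i. m i + (if \<rho> i = 1 then s i else 0)) z"
proof -
  have "(\<lambda>t. if t = 1 then - Av n \<rho> s x t else Av n \<rho> s x t) = Av n \<rho> (\<lambda>i. if \<rho> i = 1 then - s i else s i) x" for x
    using assms by (auto simp: fun_eq_iff Av_def sum_negf[symmetric] intro!: sum.cong)
  moreover have "Lf n m x + Av n \<rho> s x 1 = Lf n (\<lambda>i. m i + (if \<rho> i = 1 then s i else 0)) x" for x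
    using assms by (auto simp: Av_def Lf_def algebra_simps sum.distrib intro!: sum.cong)
  ultimately show ?thesis using assms by (simp add: Fm_def refl_0 algebra_simps)
qed

lemma tau_bij: "1 \<le> k \<Longrightarrow> Suc k \<le> n \<Longrightarrow> bij_betw (tau k) {1..n} {1..n}"
  by (rule bij_betw_byWitness[where f' = "tau k"]) (auto simp: tau_def)

lemma Fm_id: "Fm n id (\<lambda>_. 1) (\<lambda>_. 0) = id"
proof (rule ext)
  fix z :: avec
  have "Av n id (\<lambda>_. 1) x = x" for x
  proof (rule ext)
    fix t show "Av n id (\<lambda>_. 1) x t = x t"
    proof (cases "t \<in> {1..n}")
      case True
      then have "(\<Sum>i\<in>{1..n}. if i = t then x i else 0) = x t" by (subst sum.delta) auto
      then show ?thesis using True by (simp add: Av_def)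
    qed (simp add: Av_def)
  qed
  then show "Fm n id (\<lambda>_. 1) (\<lambda>_. 0) z = id z" by (simp add: Fm_def Lf_def)
qed

lemma aff_weyl_Fm:
  assumes "w \<in> aff_weyl n" "1 \<le> n"
  shows "\<exists>\<rho> s m. goodF n \<rho> s m \<and> w = Fm n \<rho> s m"
  using assms(1)
proof induction
  case id_in
  have "goodF n id (\<lambda>_. 1) (\<lambda>_. 0)" by (simp add: goodF_def)
  then show ?case using Fm_id by metis
next
  case (refl_comp w \<gamma>)
  then obtain \<rho> s m where g: "goodF n \<rho> s m" and w: "w = Fm n \<rho> s m" by blast
  have b: "bij_betw \<rho> {1..n} {1..n}" and sg: "\<forall>i\<in>{1..n}. s i = 1 \<or> s i = -1" and mi: "\<forall>i\<in>{1..n}. m i \<in> \<int>"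
    using g unfolding goodF_def by auto
  from refl_comp.hyps(2) show ?case
  proof (cases rule: simple_roots_cases)
    case (sw k)
    have "goodF n (tau k \<circ> \<rho>) s m" using g b tau_bij[of k n] sw unfolding goodF_def
      using bij_betw_trans by auto
    moreover have "areflect n \<gamma> \<circ> w = Fm n (tau k \<circ> \<rho>) s m"
      using sw by (simp add: fun_eq_iff w comp_sw)
    ultimately show ?thesis by blast
  next
    case nn
    have "goodF n \<rho> (\<lambda>i. if \<rho> i = n then - s i else s i) m" using g sg unfolding goodF_def by auto
    moreover have "areflect n \<gamma> \<circ> w = Fm n \<rho> (\<lambda>i. if \<rho> i = n then - s i else s i) m"
      using nn by (simp add: fun_eq_iff w comp_n)
    ultimately show ?thesis by blast
  next
    case z
    have "goodF n \<rho> (\<lambda>i. if \<rho> i = 1 then - s i else s i) (\<lambda>i. m i + (if \<rho> i = 1 then s i else 0))"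
      using g sg mi unfolding goodF_def by (auto; metis Ints_1 Ints_add Ints_minus)
    moreover have "areflect n \<gamma> \<circ> w = Fm n \<rho> (\<lambda>i. if \<rho> i = 1 then - s i else s i) (\<lambda>i. m i + (if \<rho> i = 1 then s i else 0))"
      using z assms(2) by (simp add: fun_eq_iff w comp_0)
    ultimately show ?thesis by blast
  qed
qed

lemma simple_refl_invol:
  assumes "\<gamma> \<in> aff_simple_roots n" "1 \<le> n"
  shows "areflect n \<gamma> (areflect n \<gamma> z) = z"
proof -
  obtain y c where z: "z = (y, c)" by fastforce
  from assms(1) show ?thesis
  proof (cases rule: simple_roots_cases)
    case (sw k) then show ?thesis using z by (simp add: refl_swap)
  next
    case nn then show ?thesis using z by (simp add: refl_n fun_eq_iff)
  next
    case zz: z then show ?thesis using z assms(2) by (simp add: refl_0 fun_eq_iff)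
  qed
qed

lemma simple_refl_bij:
  assumes "\<gamma> \<in> aff_simple_roots n" "1 \<le> n"
  shows "bij (areflect n \<gamma>)" "inv (areflect n \<gamma>) = areflect n \<gamma>"
proof -
  show "bij (areflect n \<gamma>)"
    by (rule o_bij[where g = "areflect n \<gamma>"]) (auto simp: fun_eq_iff simple_refl_invol[OF assms])
  show "inv (areflect n \<gamma>) = areflect n \<gamma>"
    by (rule inv_equality) (auto simp: simple_refl_invol[OF assms])
qed

lemma aff_weyl_bij: "w \<in> aff_weyl n \<Longrightarrow> 1 \<le> n \<Longrightarrow> bij w"
proof (induction rule: aff_weyl.induct)
  case id_in then show ?case using bij_id by (simp add: id_def)
next
  case (refl_comp w \<gamma>)
  have "bij w" using refl_comp by simp
  moreover have "bij (areflect n \<gamma>)" by (rule simple_refl_bij(1)[OF refl_comp.hyps(2) refl_comp.prems])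
  ultimately show ?case by (rule bij_comp)
qed

lemma aff_weyl_rcomp:
  assumes "w \<in> aff_weyl n" "\<gamma> \<in> aff_simple_roots n"
  shows "w \<circ> areflect n \<gamma> \<in> aff_weyl n"
  using assms(1)
proof induction
  case id_in
  then show ?case using aff_weyl.refl_comp[OF aff_weyl.id_in assms(2)] by simp
next
  case (refl_comp w \<delta>)
  then show ?case using aff_weyl.refl_comp[OF refl_comp.IH refl_comp.hyps(2)] by (simp only: comp_assoc)
qed

lemma aff_weyl_invcomp:
  assumes "w0 \<in> aff_weyl n" "1 \<le> n"
  shows "\<forall>w \<in> aff_weyl n. inv w0 \<circ> w \<in> aff_weyl n"
  using assms(1)
proof induction
  case id_in
  then show ?case by simp
next
  case (refl_comp w0 \<gamma>)
  show ?case
  proof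
    fix w assume w: "w \<in> aff_weyl n"
    have "inv (areflect n \<gamma> \<circ> w0) = inv w0 \<circ> areflect n \<gamma>"
      using o_inv_distrib[OF simple_refl_bij(1)[OF refl_comp.hyps(2) assms(2)] aff_weyl_bij[OF refl_comp.hyps(1) assms(2)]]
        simple_refl_bij(2)[OF refl_comp.hyps(2) assms(2)] by simp
    then have "inv (areflect n \<gamma> \<circ> w0) \<circ> w = inv w0 \<circ> (areflect n \<gamma> \<circ> w)" by (simp add: comp_assoc)
    moreover have "inv w0 \<circ> (areflect n \<gamma> \<circ> w) \<in> aff_weyl n"
      using refl_comp.IH aff_weyl.refl_comp[OF w refl_comp.hyps(2)] by blast
    ultimately show "inv (areflect n \<gamma> \<circ> w0) \<circ> w \<in> aff_weyl n" by simp
  qed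
qed

lemma aff_weyl_inv: "w \<in> aff_weyl n \<Longrightarrow> 1 \<le> n \<Longrightarrow> inv w \<in> aff_weyl n"
  using aff_weyl_invcomp[of w n] aff_weyl.id_in[of n] by auto



lemma aff_weyl_aneg: "w \<in> aff_weyl n \<Longrightarrow> 1 \<le> n \<Longrightarrow> w (aneg z) = aneg (w z)"
  using aff_weyl_Fm[of w n] Fm_aneg by metis

lemma aff_weyl_roots: "w \<in> aff_weyl n \<Longrightarrow> 1 \<le> n \<Longrightarrow> z \<in> aff_roots n \<Longrightarrow> w z \<in> aff_roots n"
  using aff_weyl_Fm[of w n] Fm_roots by metis

lemma mono_id:
  assumes r: "\<forall>i\<in>{1..n}. \<rho> i \<in> {1..n}" and m: "\<forall>i. 1 \<le> i \<and> i < n \<longrightarrow> \<rho> i < \<rho> (Suc i)"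
  shows "\<forall>i\<in>{1..n}. \<rho> i = i"
proof
  fix i assume i: "i \<in> {1..n}"
  have step: "\<forall>d. 1 \<le> j \<and> j + d \<le> n \<longrightarrow> \<rho> j + d \<le> \<rho> (j + d)" for j
  proof
    fix d show "1 \<le> j \<and> j + d \<le> n \<longrightarrow> \<rho> j + d \<le> \<rho> (j + d)"
    proof (induction d)
      case 0 then show ?case by simp
    next
      case (Suc d)
      show ?case
      proof
        assume a: "1 \<le> j \<and> j + Suc d \<le> n"
        then have "\<rho> j + d \<le> \<rho> (j + d)" using Suc by simp
        moreover have "\<rho> (j + d) < \<rho> (Suc (j + d))" using m a by simp
        ultimately show "\<rho> j + Suc d \<le> \<rho> (j + Suc d)" by simp
      qed
    qed
  qed
  have "\<rho> 1 + (i - 1) \<le> \<rho> (1 + (i - 1))" using spec[OF step[of 1], of "i - 1"] i by auto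
  moreover have "\<rho> 1 \<ge> 1" using r i by auto
  ultimately have a: "i \<le> \<rho> i" using i by auto
  have "\<rho> i + (n - i) \<le> \<rho> (i + (n - i))" using spec[OF step[of i], of "n - i"] i by auto
  moreover have "\<rho> n \<le> n" using r i by auto
  ultimately have "\<rho> i \<le> i" using i by auto
  with a show "\<rho> i = i" by simp
qed

lemma Fm_preserve_id:
  assumes g: "goodF n \<rho> s m" and n: "1 \<le> n"
    and P: "\<forall>\<gamma>\<in>aff_pos_roots n. Fm n \<rho> s m \<gamma> \<in> aff_pos_roots n"
  shows "Fm n \<rho> s m = id"
proof -
  have b: "bij_betw \<rho> {1..n} {1..n}" and sg: "\<forall>i\<in>{1..n}. s i = 1 \<or> s i = -1" and mi: "\<forall>i\<in>{1..n}. m i \<in> \<int>"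
    using g unfolding goodF_def by auto
  have r: "\<forall>i\<in>{1..n}. \<rho> i \<in> {1..n}" using b unfolding bij_betw_def by auto
  have m0: "m i = 0" and s1: "s i = 1" if i: "i \<in> {1..n}" for i
  proof -
    have "sv 1 i 1 i \<in> roots_C n" by (rule sv_in_roots) (use i in auto)
    moreover have "hpos n (sv 1 i 1 i) > 0" using i wt_pos[OF i] by (simp add: hpos_sv)
    ultimately have "(sv 1 i 1 i, 0) \<in> aff_pos_roots n" by (simp add: affpos_char)
    then have A: "(sv (s i) (\<rho> i) (s i) (\<rho> i), m i + m i) \<in> aff_pos_roots n"
      using P Fm_sv[OF g i i, of 1 1 0] by auto
    have "sv (-1) i (-1) i \<in> roots_C n" by (rule sv_in_roots) (use i in auto)
    then have "(sv (-1) i (-1) i, 1) \<in> aff_pos_roots n" by (simp add: affpos_char)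
    then have B: "(sv (- s i) (\<rho> i) (- s i) (\<rho> i), 1 - m i - m i) \<in> aff_pos_roots n"
      using P Fm_sv[OF g i i, of "-1" "-1" 1] by auto
    have "0 \<le> m i + m i" "0 \<le> 1 - m i - m i" using A B by (auto simp: affpos_char)
    moreover have "m i \<in> \<int>" using mi i by blast
    then obtain z where z: "m i = of_int z" by (auto elim: Ints_cases)
    ultimately show m0: "m i = 0" by simp
    have "hpos n (sv (s i) (\<rho> i) (s i) (\<rho> i)) > 0" using A m0 by (auto simp: affpos_char)
    then have "s i * wt n (\<rho> i) + s i * wt n (\<rho> i) > 0" using r i by (simp add: hpos_sv)
    then have "s i > 0" using wt_pos[of "\<rho> i" n] r i
      by (smt (verit, best) mult_nonpos_nonneg)
    then show "s i = 1" using sg i by auto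
  qed
  have mono: "\<forall>i. 1 \<le> i \<and> i < n \<longrightarrow> \<rho> i < \<rho> (Suc i)"
  proof (intro allI impI)
    fix i assume i: "1 \<le> i \<and> i < n"
    then have i1: "i \<in> {1..n}" and i2: "Suc i \<in> {1..n}" by auto
    have "sv 1 i (-1) (Suc i) \<in> roots_C n" by (rule sv_in_roots) (use i in auto)
    moreover have "hpos n (sv 1 i (-1) (Suc i)) > 0" using i1 i2 by (simp add: hpos_sv wt_def)
    ultimately have "(sv 1 i (-1) (Suc i), 0) \<in> aff_pos_roots n" by (simp add: affpos_char)
    then have "(sv (s i) (\<rho> i) (- s (Suc i)) (\<rho> (Suc i)), m i - m (Suc i)) \<in> aff_pos_roots n"
      using P Fm_sv[OF g i1 i2, of 1 "-1" 0] by auto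
    then have "hpos n (sv 1 (\<rho> i) (- 1) (\<rho> (Suc i))) > 0"
      using m0[OF i1] m0[OF i2] s1[OF i1] s1[OF i2] by (auto simp: affpos_char)
    then show "\<rho> i < \<rho> (Suc i)" using r i1 i2 by (auto simp: hpos_sv wt_def)
  qed
  have rid: "\<forall>i\<in>{1..n}. \<rho> i = i" by (rule mono_id[OF r mono])
  show ?thesis
  proof (rule ext)
    fix z :: avec
    have "Av n \<rho> s x = x" for x
    proof (rule ext)
      fix t show "Av n \<rho> s x t = x t"
      proof (cases "t \<in> {1..n}")
        case True
        have "(\<Sum>i\<in>{1..n}. if \<rho> i = t then s i * x i else 0) = (\<Sum>i\<in>{1..n}. if i = t then x i else 0)"
          by (rule sum.cong) (auto simp: rid s1)
        also have "\<dots> = x t" using True by (subst sum.delta) auto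
        finally show ?thesis using True by (simp add: Av_def)
      qed (auto simp: Av_def)
    qed
    moreover have "Lf n m x = 0" for x unfolding Lf_def by (rule sum.neutral) (simp add: m0)
    ultimately show "Fm n \<rho> s m z = id z" by (simp add: Fm_def)
  qed
qed

lemma unique_w:
  assumes n: "1 \<le> n" and w: "w \<in> aff_weyl n" and w0: "w0 \<in> aff_weyl n"
    and eq: "inv_set n w = inv_set n w0"
  shows "w = w0"
proof -
  let ?P = "aff_pos_roots n"
  have u: "inv w0 \<circ> w \<in> aff_weyl n" using aff_weyl_invcomp[OF w0 n] w by blast
  then obtain \<rho> s m where g: "goodF n \<rho> s m" and ue: "inv w0 \<circ> w = Fm n \<rho> s m"
    using aff_weyl_Fm[OF _ n] by blast
  have iw0: "inv w0 \<in> aff_weyl n" using aff_weyl_inv[OF w0 n] .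
  have iw: "inv w \<in> aff_weyl n" using aff_weyl_inv[OF w n] .
  have bw: "bij w" using aff_weyl_bij[OF w n] .
  have bw0: "bij w0" using aff_weyl_bij[OF w0 n] .
  have pres: "\<forall>\<gamma>\<in>?P. Fm n \<rho> s m \<gamma> \<in> ?P"
  proof
    fix \<gamma> assume gP: "\<gamma> \<in> ?P"
    define \<beta> where "\<beta> = w \<gamma>"
    have gR: "\<gamma> \<in> aff_roots n" using affpos_roots[OF gP] .
    have bR: "\<beta> \<in> aff_roots n" unfolding \<beta>_def using aff_weyl_roots[OF w n gR] .
    have ib: "inv w \<beta> = \<gamma>" unfolding \<beta>_def using bw by (simp add: bij_is_inj inv_f_f)
    have ngP: "aneg \<gamma> \<notin> ?P" using affroots_split[OF gR] gP by simp
    have "inv w0 \<beta> \<in> ?P"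
    proof (cases "\<beta> \<in> ?P")
      case True
      show ?thesis
      proof (rule ccontr)
        assume nP: "inv w0 \<beta> \<notin> ?P"
        have "inv w0 \<beta> \<in> aff_roots n" using aff_weyl_roots[OF iw0 n bR] .
        then have "aneg (inv w0 \<beta>) \<in> ?P" using affroots_split nP by blast
        then have "\<beta> \<in> inv_set n w0" using True by (simp add: inv_set_def aneg_image)
        then have "\<beta> \<in> inv_set n w" using eq by simp
        then have "aneg \<gamma> \<in> ?P" using ib by (simp add: inv_set_def aneg_image)
        then show False using ngP by simp
      qed
    next
      case False
      then have nb: "aneg \<beta> \<in> ?P" using affroots_split[OF bR] by simp
      have "inv w (aneg \<beta>) = aneg \<gamma>" using aff_weyl_aneg[OF iw n] ib by simp
      then have "aneg \<beta> \<in> inv_set n w" using nb gP by (simp add: inv_set_def aneg_image)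
      then have "aneg \<beta> \<in> inv_set n w0" using eq by simp
      then have "aneg (inv w0 (aneg \<beta>)) \<in> ?P" by (simp add: inv_set_def aneg_image)
      then show ?thesis using aff_weyl_aneg[OF iw0 n] by simp
    qed
    moreover have "Fm n \<rho> s m \<gamma> = inv w0 \<beta>" unfolding \<beta>_def using ue by (metis comp_apply)
    ultimately show "Fm n \<rho> s m \<gamma> \<in> ?P" by simp
  qed
  have "inv w0 \<circ> w = id" using Fm_preserve_id[OF g n pres] ue by simp
  then have "w0 \<circ> (inv w0 \<circ> w) = w0" by simp
  moreover have "w0 \<circ> inv w0 = id" using bw0 by (simp add: fun_eq_iff bij_is_surj surj_f_inv_f)
  ultimately show ?thesis by (metis comp_assoc comp_id id_comp)
qed



definition sg :: "nat \<Rightarrow> nat \<Rightarrow> real" where "sg p i = (if i \<le> p then -1 else 1)"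
definition mp :: "nat \<Rightarrow> nat \<Rightarrow> real" where "mp p i = (if i \<le> p then 1 else 0)"

definition valid :: "nat \<Rightarrow> nat \<Rightarrow> (nat \<Rightarrow> nat) \<Rightarrow> bool" where
  "valid n p \<rho> \<longleftrightarrow> p \<le> n \<and> bij_betw \<rho> {1..n} {1..n}
     \<and> (\<forall>i j. 1 \<le> i \<and> i < j \<and> j \<le> p \<longrightarrow> \<rho> j < \<rho> i)
     \<and> (\<forall>i j. p < i \<and> i < j \<and> j \<le> n \<longrightarrow> \<rho> i < \<rho> j)"

definition condI :: "nat \<Rightarrow> nat \<Rightarrow> (nat \<Rightarrow> nat) \<Rightarrow> nat \<Rightarrow> nat \<Rightarrow> bool" where
  "condI n p \<rho> i j \<longleftrightarrow> (1 \<le> i \<and> i \<le> j \<and> j \<le> p) \<or> (1 \<le> i \<and> i \<le> p \<and> p < j \<and> j \<le> n \<and> \<rho> j < \<rho> i)"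

definition Iset :: "nat \<Rightarrow> nat \<Rightarrow> (nat \<Rightarrow> nat) \<Rightarrow> vec set" where
  "Iset n p \<rho> = {sv 1 i 1 j | i j. condI n p \<rho> i j}"

definition EE :: "nat \<Rightarrow> nat \<Rightarrow> (nat \<Rightarrow> nat) \<Rightarrow> avec \<Rightarrow> avec" where
  "EE n p \<rho> = Fm n \<rho> (sg p) (mp p)"

lemma valid_goodF: "valid n p \<rho> \<Longrightarrow> goodF n \<rho> (sg p) (mp p)"
  by (auto simp: valid_def goodF_def sg_def mp_def)

lemma vneg_sv: "vneg (sv a k b l) = sv (-a) k (-b) l"
  by (auto simp: fun_eq_iff vneg_def sv_app)

lemma arith_core:
  fixes a b c :: real and z :: int
  assumes v: "valid n p \<rho>" and a: "a = 1 \<or> a = -1" and b: "b = 1 \<or> b = -1" and cz: "c = of_int z"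
    and k: "k \<in> {1..n}" and l: "l \<in> {1..n}" and kl: "k = l \<longrightarrow> a = b"
    and C1: "c > 0 \<or> (c = 0 \<and> a * wt n k + b * wt n l > 0)"
    and C2: "c + a * mp p k + b * mp p l < 0 \<or> (c + a * mp p k + b * mp p l = 0 \<and>
              - (a * sg p k) * wt n (\<rho> k) - (b * sg p l) * wt n (\<rho> l) > 0)"
  shows "a = -1 \<and> b = -1 \<and> c = 1 \<and> ((k \<le> p \<and> l \<le> p) \<or> (k \<le> p \<and> p < l \<and> \<rho> l < \<rho> k) \<or> (l \<le> p \<and> p < k \<and> \<rho> k < \<rho> l))"
proof -
  have dec: "\<And>i j. 1 \<le> i \<Longrightarrow> i < j \<Longrightarrow> j \<le> p \<Longrightarrow> \<rho> j < \<rho> i"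
   and inc: "\<And>i j. p < i \<Longrightarrow> i < j \<Longrightarrow> j \<le> n \<Longrightarrow> \<rho> i < \<rho> j"
    using v unfolding valid_def by auto
  have rk: "\<rho> k \<in> {1..n}" "\<rho> l \<in> {1..n}" using v k l unfolding valid_def bij_betw_def by auto
  have wk: "wt n (\<rho> k) > 0" "wt n (\<rho> l) > 0" using wt_pos rk by auto
  have wrd: "wt n (\<rho> k) - wt n (\<rho> l) = real (\<rho> l) - real (\<rho> k)" by (simp add: wt_def)
  have wd: "wt n k - wt n l = real l - real k" by (simp add: wt_def)
  have wkl: "wt n k > 0" "wt n l > 0" using wt_pos k l by auto
  from a b consider "a = 1" "b = 1" | "a = 1" "b = -1" | "a = -1" "b = 1" | "a = -1" "b = -1" by blast
  then show ?thesis
  proof cases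
    case 1
    then show ?thesis using C1 C2 wk by (auto simp: mp_def sg_def split: if_splits)
  next
    case 2
    have "z \<ge> 0" using C1 cz wkl by (cases "z \<ge> 0") auto
    show ?thesis
    proof (cases "z = 0")
      case True
      then have "k < l" using C1 cz 2 wd by auto
      show ?thesis
      proof (cases "l \<le> p")
        case True
        then have "\<rho> l < \<rho> k" using dec[of k l] \<open>k < l\<close> k by auto
        then show ?thesis using C2 True \<open>k < l\<close> cz \<open>z = 0\<close> 2 wrd by (auto simp: mp_def sg_def split: if_splits)
      next
        case False
        show ?thesis
        proof (cases "k \<le> p")
          case True
          then show ?thesis using C2 False cz \<open>z = 0\<close> 2 by (auto simp: mp_def sg_def split: if_splits)
        next
          case False
          then have "\<rho> k < \<rho> l" using inc[of k l] \<open>k < l\<close> l by auto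
          then show ?thesis using C2 False \<open>\<not> l \<le> p\<close> cz \<open>z = 0\<close> 2 wrd by (auto simp: mp_def sg_def split: if_splits)
        qed
      qed
    next
      case False
      then have "z \<ge> 1" using \<open>z \<ge> 0\<close> by simp
      then have "c \<ge> 1" using cz by simp
      then show ?thesis using C2 2 wk by (auto simp: mp_def sg_def split: if_splits)
    qed
  next
    case 3
    have "z \<ge> 0" using C1 cz wkl by (cases "z \<ge> 0") auto
    show ?thesis
    proof (cases "z = 0")
      case True
      then have "l < k" using C1 cz 3 wd by auto
      show ?thesis
      proof (cases "k \<le> p")
        case True
        then have "\<rho> k < \<rho> l" using dec[of l k] \<open>l < k\<close> l by auto
        then show ?thesis using C2 True \<open>l < k\<close> cz \<open>z = 0\<close> 3 wrd by (auto simp: mp_def sg_def split: if_splits)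
      next
        case False
        show ?thesis
        proof (cases "l \<le> p")
          case True
          then show ?thesis using C2 False cz \<open>z = 0\<close> 3 by (auto simp: mp_def sg_def split: if_splits)
        next
          case False
          then have "\<rho> l < \<rho> k" using inc[of l k] \<open>l < k\<close> k by auto
          then show ?thesis using C2 False \<open>\<not> k \<le> p\<close> cz \<open>z = 0\<close> 3 wrd by (auto simp: mp_def sg_def split: if_splits)
        qed
      qed
    next
      case False
      then have "z \<ge> 1" using \<open>z \<ge> 0\<close> by simp
      then have "c \<ge> 1" using cz by simp
      then show ?thesis using C2 3 wk by (auto simp: mp_def sg_def split: if_splits)
    qed
  next
    case 4
    have "z \<ge> 1" using C1 cz wkl 4 by (cases "z \<ge> 1") auto
    then have c1: "c \<ge> 1" using cz by simp
    show ?thesis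
    proof (cases "k \<le> p"; cases "l \<le> p")
      assume "k \<le> p" "l \<le> p"
      then have "c < 2" using C2 4 wk by (auto simp: mp_def sg_def)
      then have "z < 2" using cz by simp
      then have "c = 1" using \<open>z \<ge> 1\<close> cz by simp
      then show ?thesis using 4 \<open>k \<le> p\<close> \<open>l \<le> p\<close> by simp
    next
      assume "k \<le> p" "\<not> l \<le> p"
      then show ?thesis using C2 4 c1 wrd by (auto simp: mp_def sg_def split: if_splits)
    next
      assume "\<not> k \<le> p" "l \<le> p"
      then show ?thesis using C2 4 c1 wrd by (auto simp: mp_def sg_def split: if_splits)
    next
      assume "\<not> k \<le> p" "\<not> l \<le> p"
      then show ?thesis using C2 4 c1 by (auto simp: mp_def sg_def split: if_splits)
    qed
  qed
qed



lemma sv_sym: "sv a k b l = sv b l a k" by (auto simp: fun_eq_iff sv_app)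

lemma EE_sv: "valid n p \<rho> \<Longrightarrow> k \<in> {1..n} \<Longrightarrow> l \<in> {1..n} \<Longrightarrow>
  EE n p \<rho> (sv a k b l, c) = (sv (a * sg p k) (\<rho> k) (b * sg p l) (\<rho> l), c + a * mp p k + b * mp p l)"
  unfolding EE_def using Fm_sv[OF valid_goodF] by blast

lemma EE_invset:
  assumes v: "valid n p \<rho>" and n: "1 \<le> n"
  shows "{\<gamma> \<in> aff_pos_roots n. EE n p \<rho> \<gamma> \<in> aneg ` aff_pos_roots n} = {(vneg \<beta>, 1::real) | \<beta>. \<beta> \<in> Iset n p \<rho>}"
proof -
  have rimg: "\<And>i. i \<in> {1..n} \<Longrightarrow> \<rho> i \<in> {1..n}" using v unfolding valid_def bij_betw_def by auto
  show ?thesis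
  proof (intro equalityI subsetI)
    fix \<gamma> :: avec assume g: "\<gamma> \<in> {\<gamma> \<in> aff_pos_roots n. EE n p \<rho> \<gamma> \<in> aneg ` aff_pos_roots n}"
    obtain x c where gc: "\<gamma> = (x, c)" by fastforce
    have xP: "(x, c) \<in> aff_pos_roots n" and xE: "aneg (EE n p \<rho> (x, c)) \<in> aff_pos_roots n"
      using g gc by (auto simp: aneg_image)
    have xr: "x \<in> roots_C n" and cI: "c \<in> \<int>" and C1: "c > 0 \<or> (c = 0 \<and> hpos n x > 0)"
      using xP by (auto simp: affpos_char)
    obtain a k b l where xs: "x = sv a k b l" "a = 1 \<or> a = -1" "b = 1 \<or> b = -1"
      "k \<in> {1..n}" "l \<in> {1..n}" "k = l \<longrightarrow> a = b" using xr unfolding roots_char by blast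
    obtain z where cz: "c = of_int z" using cI by (auto elim: Ints_cases)
    have E: "aneg (EE n p \<rho> (x, c)) = (sv (- (a * sg p k)) (\<rho> k) (- (b * sg p l)) (\<rho> l), - (c + a * mp p k + b * mp p l))"
      using EE_sv[OF v xs(4,5)] xs(1) by (simp add: aneg_def vneg_sv)
    have hE: "hpos n (sv (- (a * sg p k)) (\<rho> k) (- (b * sg p l)) (\<rho> l)) = - (a * sg p k) * wt n (\<rho> k) - (b * sg p l) * wt n (\<rho> l)"
      using rimg xs(4,5) by (simp add: hpos_sv)
    have C2: "c + a * mp p k + b * mp p l < 0 \<or> (c + a * mp p k + b * mp p l = 0 \<and>
              - (a * sg p k) * wt n (\<rho> k) - (b * sg p l) * wt n (\<rho> l) > 0)"
      using xE unfolding E affpos_char hE by auto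
    have C1': "c > 0 \<or> (c = 0 \<and> a * wt n k + b * wt n l > 0)" using C1 xs by (simp add: hpos_sv)
    have R: "a = -1 \<and> b = -1 \<and> c = 1 \<and> ((k \<le> p \<and> l \<le> p) \<or> (k \<le> p \<and> p < l \<and> \<rho> l < \<rho> k) \<or> (l \<le> p \<and> p < k \<and> \<rho> k < \<rho> l))"
      by (rule arith_core[OF v xs(2,3) cz xs(4,5,6) C1' C2])
    have "\<exists>i j. x = vneg (sv 1 i 1 j) \<and> condI n p \<rho> i j"
    proof (cases "k \<le> l")
      case True
      have "x = vneg (sv 1 k 1 l)" using R xs by (simp add: vneg_sv)
      moreover have "condI n p \<rho> k l" using R True xs(4,5) v unfolding condI_def valid_def by auto
      ultimately show ?thesis by blast
    next
      case False
      have "x = vneg (sv 1 l 1 k)" using R xs by (simp add: vneg_sv sv_sym)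
      moreover have "condI n p \<rho> l k" using R False xs(4,5) v unfolding condI_def valid_def by auto
      ultimately show ?thesis by blast
    qed
    then show "\<gamma> \<in> {(vneg \<beta>, 1::real) | \<beta>. \<beta> \<in> Iset n p \<rho>}" using gc R unfolding Iset_def by blast
  next
    fix \<gamma> :: avec assume "\<gamma> \<in> {(vneg \<beta>, 1::real) | \<beta>. \<beta> \<in> Iset n p \<rho>}"
    then obtain i j where gi: "\<gamma> = (vneg (sv 1 i 1 j), 1)" and ci: "condI n p \<rho> i j"
      unfolding Iset_def by blast
    have ij: "i \<in> {1..n}" "j \<in> {1..n}" "i \<le> j" using ci v unfolding condI_def valid_def by auto
    have g2: "\<gamma> = (sv (-1) i (-1) j, 1)" using gi by (simp add: vneg_sv)
    have "sv (-1) i (-1) j \<in> roots_C n" by (rule sv_in_roots) (use ij in auto)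
    then have gP: "\<gamma> \<in> aff_pos_roots n" using g2 by (simp add: affpos_char)
    have E: "aneg (EE n p \<rho> \<gamma>) = (sv (sg p i) (\<rho> i) (sg p j) (\<rho> j), mp p i + mp p j - 1)"
      using EE_sv[OF v ij(1,2)] g2 by (simp add: aneg_def vneg_sv)
    have r: "\<rho> i \<in> {1..n}" "\<rho> j \<in> {1..n}" using rimg ij by auto
    have "sv (sg p i) (\<rho> i) (sg p j) (\<rho> j) \<in> roots_C n"
    proof (rule sv_in_roots)
      show "\<rho> i = \<rho> j \<longrightarrow> sg p i = sg p j"
        using v ij unfolding valid_def bij_betw_def by (auto dest: inj_onD)
    qed (use r in \<open>auto simp: sg_def\<close>)
    moreover have "mp p i + mp p j - 1 \<in> \<int>" by (simp add: mp_def)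
    moreover have "mp p i + mp p j - 1 > 0 \<or> (mp p i + mp p j - 1 = 0 \<and> hpos n (sv (sg p i) (\<rho> i) (sg p j) (\<rho> j)) > 0)"
      using ci r by (auto simp: condI_def mp_def sg_def hpos_sv wt_def)
    ultimately have "aneg (EE n p \<rho> \<gamma>) \<in> aff_pos_roots n" unfolding E affpos_char by blast
    then show "\<gamma> \<in> {\<gamma> \<in> aff_pos_roots n. EE n p \<rho> \<gamma> \<in> aneg ` aff_pos_roots n}"
      using gP by (simp add: aneg_image)
  qed
qed



lemma Fm_cong:
  assumes "\<forall>i\<in>{1..n}. \<rho> i = \<rho>' i \<and> s i = s' i \<and> m i = m' i"
  shows "Fm n \<rho> s m = Fm n \<rho>' s' m'"
proof -
  have "Av n \<rho> s x = Av n \<rho>' s' x" for x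
    unfolding Av_def using assms by (auto intro!: ext sum.cong)
  moreover have "Lf n m x = Lf n m' x" for x
    unfolding Lf_def using assms by (auto intro!: sum.cong)
  ultimately show ?thesis by (simp add: Fm_def)
qed

lemma EE_weyl_aux:
  assumes n: "1 \<le> n"
  shows "\<forall>p \<rho>. valid n p \<rho> \<and> sum \<rho> {1..p} = N \<longrightarrow> EE n p \<rho> \<in> aff_weyl n"
proof (induction N rule: less_induct)
  case (less N)
  show ?case
  proof (intro allI impI)
    fix p \<rho> assume vN: "valid n p \<rho> \<and> sum \<rho> {1..p} = N"
    then have v: "valid n p \<rho>" and N: "sum \<rho> {1..p} = N" by auto
    have pn: "p \<le> n" and b: "bij_betw \<rho> {1..n} {1..n}"
      and dec: "\<And>i j. 1 \<le> i \<Longrightarrow> i < j \<Longrightarrow> j \<le> p \<Longrightarrow> \<rho> j < \<rho> i"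
      and inc: "\<And>i j. p < i \<Longrightarrow> i < j \<Longrightarrow> j \<le> n \<Longrightarrow> \<rho> i < \<rho> j"
      using v unfolding valid_def by auto
    have rimg: "\<And>i. i \<in> {1..n} \<Longrightarrow> \<rho> i \<in> {1..n}" using b unfolding bij_betw_def by auto
    have rinj: "\<And>i j. i \<in> {1..n} \<Longrightarrow> j \<in> {1..n} \<Longrightarrow> \<rho> i = \<rho> j \<Longrightarrow> i = j"
      using b unfolding bij_betw_def by (auto dest: inj_onD)
    have rsurj: "\<And>v. v \<in> {1..n} \<Longrightarrow> \<exists>k\<in>{1..n}. \<rho> k = v"
      using b unfolding bij_betw_def by (metis imageE)
    show "EE n p \<rho> \<in> aff_weyl n"
    proof (cases "p = 0")
      case True
      have "\<forall>i. 1 \<le> i \<and> i < n \<longrightarrow> \<rho> i < \<rho> (Suc i)" using inc True by auto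
      then have rid: "\<forall>i\<in>{1..n}. \<rho> i = i" using mono_id[of n \<rho>] rimg by blast
      have "EE n p \<rho> = Fm n id (\<lambda>_. 1) (\<lambda>_. 0)"
        unfolding EE_def by (rule Fm_cong) (auto simp: rid True sg_def mp_def)
      then show ?thesis using Fm_id aff_weyl.id_in by simp
    next
      case False
      then have p1: "1 \<le> p" by simp
      show ?thesis
      proof (cases "\<exists>i0 j0. 1 \<le> i0 \<and> i0 \<le> p \<and> p < j0 \<and> j0 \<le> n \<and> \<rho> i0 = Suc (\<rho> j0)")
        case True
        then obtain i0 j0 where ij: "1 \<le> i0" "i0 \<le> p" "p < j0" "j0 \<le> n" "\<rho> i0 = Suc (\<rho> j0)" by blast
        define k where "k = \<rho> j0"
        have i0n: "i0 \<in> {1..n}" and j0n: "j0 \<in> {1..n}" using ij pn by auto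
        have k1: "1 \<le> k" "k < n" using rimg[OF j0n] rimg[OF i0n] ij(5) unfolding k_def by auto
        define \<rho>' where "\<rho>' = tau k \<circ> \<rho>"
        have eqk: "\<And>i. i \<in> {1..n} \<Longrightarrow> \<rho> i = k \<longleftrightarrow> i = j0" using rinj j0n unfolding k_def by blast
        have eqk1: "\<And>i. i \<in> {1..n} \<Longrightarrow> \<rho> i = Suc k \<longleftrightarrow> i = i0" using rinj i0n ij(5) unfolding k_def by metis
        have r': "\<rho>' i = (if i = j0 then Suc k else if i = i0 then k else \<rho> i)" if i: "i \<in> {1..n}" for i
        proof -
          have "\<rho> i = k \<longleftrightarrow> i = j0" "\<rho> i = Suc k \<longleftrightarrow> i = i0" using eqk eqk1 i by auto
          then show ?thesis unfolding \<rho>'_def tau_def by auto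
        qed
        have b': "bij_betw \<rho>' {1..n} {1..n}" unfolding \<rho>'_def
          using bij_betw_trans[OF b tau_bij[of k n]] k1 by auto
        have v': "valid n p \<rho>'"
          unfolding valid_def
        proof (intro conjI allI impI)
          show "p \<le> n" by fact
          show "bij_betw \<rho>' {1..n} {1..n}" by fact
        next
          fix i j assume a: "1 \<le> i \<and> i < j \<and> j \<le> p"
          then have ij1: "i \<in> {1..n}" "j \<in> {1..n}" "i \<noteq> j0" "j \<noteq> j0" using pn ij by auto
          have lt: "\<rho> j < \<rho> i" using dec a by auto
          have nk: "\<rho> i \<noteq> k" "\<rho> j \<noteq> k" using eqk ij1 by auto
          have ri: "\<rho>' i = (if i = i0 then k else \<rho> i)" "\<rho>' j = (if j = i0 then k else \<rho> j)"
            using r' ij1 by auto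
          have e1: "\<rho> i = Suc k \<longleftrightarrow> i = i0" "\<rho> j = Suc k \<longleftrightarrow> j = i0" using eqk1 ij1 by auto
          show "\<rho>' j < \<rho>' i"
          proof (cases "i = i0")
            case True
            then have "j \<noteq> i0" using a by auto
            then show ?thesis using ri True lt nk e1 by simp
          next
            case False
            then show ?thesis using ri lt nk e1 by (cases "j = i0") simp_all
          qed
        next
          fix i j assume a: "p < i \<and> i < j \<and> j \<le> n"
          then have ij1: "i \<in> {1..n}" "j \<in> {1..n}" "i \<noteq> i0" "j \<noteq> i0" using pn ij by auto
          have lt: "\<rho> i < \<rho> j" using inc a by auto
          have nk: "\<rho> i \<noteq> Suc k" "\<rho> j \<noteq> Suc k" using eqk1 ij1 by auto
          have ri: "\<rho>' i = (if i = j0 then Suc k else \<rho> i)" "\<rho>' j = (if j = j0 then Suc k else \<rho> j)"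
            using r' ij1 by auto
          have e1: "\<rho> i = k \<longleftrightarrow> i = j0" "\<rho> j = k \<longleftrightarrow> j = j0" using eqk ij1 by auto
          show "\<rho>' i < \<rho>' j"
          proof (cases "i = j0")
            case True
            then have "j \<noteq> j0" using a by auto
            then show ?thesis using ri True lt nk e1 by simp
          next
            case False
            then show ?thesis using ri lt nk e1 by (cases "j = j0") simp_all
          qed
        qed
        have rk1: "\<rho> i0 = Suc k" using ij(5) k_def by simp
        have "sum \<rho> {1..p} = sum (\<lambda>i. \<rho>' i + (if i = i0 then 1 else 0)) {1..p}"
        proof (rule sum.cong)
          fix i assume i: "i \<in> {1..p}"
          then have "i \<in> {1..n}" "i \<noteq> j0" using pn ij by auto
          then show "\<rho> i = \<rho>' i + (if i = i0 then 1 else 0)" using r' rk1 by auto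
        qed simp
        also have "\<dots> = sum \<rho>' {1..p} + 1" using ij by (simp add: sum.distrib)
        finally have "sum \<rho>' {1..p} < N" using N by simp
        then have IH: "EE n p \<rho>' \<in> aff_weyl n" using less.IH v' by blast
        have sk: "(simple_root n k, 0) \<in> aff_simple_roots n" using k1 unfolding aff_simple_roots_def by auto
        have "areflect n (simple_root n k, 0) \<circ> EE n p \<rho>' = Fm n (tau k \<circ> \<rho>') (sg p) (mp p)"
          unfolding EE_def using k1 by (simp add: fun_eq_iff comp_sw)
        also have "tau k \<circ> \<rho>' = \<rho>" unfolding \<rho>'_def by (simp add: fun_eq_iff)
        finally have "areflect n (simple_root n k, 0) \<circ> EE n p \<rho>' = Fm n \<rho> (sg p) (mp p)" .
        then have "areflect n (simple_root n k, 0) \<circ> EE n p \<rho>' = EE n p \<rho>" by (simp only: EE_def)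
        then show ?thesis using aff_weyl.refl_comp[OF IH sk] by simp
      next
        case noA: False
        have rp1: "\<rho> p = 1"
        proof (rule ccontr)
          assume "\<rho> p \<noteq> 1"
          moreover have "\<rho> p \<in> {1..n}" using rimg p1 pn by auto
          ultimately have "\<rho> p - 1 \<in> {1..n}" by auto
          then obtain k where k: "k \<in> {1..n}" "\<rho> k = \<rho> p - 1" using rsurj by blast
          show False
          proof (cases "k \<le> p")
            case True
            then have "k < p \<or> k = p" by auto
            then show False
            proof
              assume "k < p" then have "\<rho> p < \<rho> k" using dec[of k p] k by auto
              then show False using k by simp
            next
              assume "k = p"
              then have "\<rho> p = \<rho> p - 1" using k by simp
              then show False using \<open>\<rho> p \<in> {1..n}\<close> by auto
            qed
          next
            case kp: False
            have "\<rho> p = Suc (\<rho> k)" using k \<open>\<rho> p \<in> {1..n}\<close> \<open>\<rho> p \<noteq> 1\<close> by auto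
            then have "1 \<le> p \<and> p \<le> p \<and> p < k \<and> k \<le> n \<and> \<rho> p = Suc (\<rho> k)" using k p1 kp by auto
            then show False using noA by blast
          qed
        qed
        have v': "valid n (p - 1) \<rho>"
          unfolding valid_def
        proof (intro conjI allI impI)
          show "p - 1 \<le> n" using pn by simp
          show "bij_betw \<rho> {1..n} {1..n}" by fact
        next
          fix i j assume "1 \<le> i \<and> i < j \<and> j \<le> p - 1" then show "\<rho> j < \<rho> i" using dec by auto
        next
          fix i j assume a: "p - 1 < i \<and> i < j \<and> j \<le> n"
          show "\<rho> i < \<rho> j"
          proof (cases "i = p")
            case True
            have jn: "j \<in> {1..n}" using a by auto
            have "\<rho> j \<noteq> 1" using rinj[of j p] jn rp1 True a p1 pn by auto
            moreover have "\<rho> j \<ge> 1" using rimg[OF jn] by simp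
            ultimately show ?thesis using True rp1 by simp
          next
            case False then show ?thesis using inc a by auto
          qed
        qed
        obtain q where q: "p = Suc q" using p1 by (cases p) auto
        have "sum \<rho> {1..p} = sum \<rho> {1..p - 1} + \<rho> p"
          unfolding q by simp
        then have "sum \<rho> {1..p - 1} < N" using N rp1 by simp
        then have IH: "EE n (p - 1) \<rho> \<in> aff_weyl n" using less.IH v' by blast
        have s0: "(vneg (theta_C n), 1) \<in> aff_simple_roots n" unfolding aff_simple_roots_def by auto
        have pin: "p \<in> {1..n}" using p1 pn by simp
        have eq1: "\<rho> i = 1 \<longleftrightarrow> i = p" if i: "i \<in> {1..n}" for i
          using rinj[OF i pin] rp1 by auto
        have "areflect n (vneg (theta_C n), 1) \<circ> EE n (p - 1) \<rho> =
          Fm n \<rho> (\<lambda>i. if \<rho> i = 1 then - sg (p - 1) i else sg (p - 1) i) (\<lambda>i. mp (p - 1) i + (if \<rho> i = 1 then sg (p - 1) i else 0))"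
          unfolding EE_def by (rule ext) (simp only: comp_apply comp_0[OF n])
        also have "\<dots> = EE n p \<rho>"
          unfolding EE_def by (rule Fm_cong) (use eq1 p1 in \<open>auto simp: sg_def mp_def\<close>)
        finally show ?thesis using aff_weyl.refl_comp[OF IH s0] by simp
      qed
    qed
  qed
qed

lemma EE_weyl: "1 \<le> n \<Longrightarrow> valid n p \<rho> \<Longrightarrow> EE n p \<rho> \<in> aff_weyl n"
  using EE_weyl_aux by blast



lemma ge_witness:
  assumes "1 \<le> a" "a \<le> b" "b \<le> n" "vsub \<gamma> \<beta> = vsub (ev a) (ev b)"
  shows "root_ge n \<gamma> \<beta>"
proof -
  define c :: "nat \<Rightarrow> nat" where "c k = (if a \<le> k \<and> k < b then 1 else 0)" for k
  have "(\<lambda>t. \<Sum>k\<in>{1..n}. real (c k) * simple_root n k t) = (\<lambda>t. \<Sum>k\<in>{a..<b}. simple_root n k t)"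
  proof (rule ext)
    fix t
    have "(\<Sum>k\<in>{1..n}. real (c k) * simple_root n k t) = (\<Sum>k\<in>{1..n}. if k \<in> {a..<b} then simple_root n k t else 0)"
      by (rule sum.cong) (auto simp: c_def)
    also have "\<dots> = (\<Sum>k\<in>{1..n} \<inter> {a..<b}. simple_root n k t)" by (simp add: sum.inter_restrict)
    also have "{1..n} \<inter> {a..<b} = {a..<b}" using assms by auto
    finally show "(\<Sum>k\<in>{1..n}. real (c k) * simple_root n k t) = (\<Sum>k\<in>{a..<b}. simple_root n k t)" .
  qed
  also have "\<dots> = vsub (ev a) (ev b)" using telescope assms by blast
  finally show ?thesis unfolding root_ge_def using assms(4) by metis
qed

lemma ge_witness2:
  assumes "1 \<le> j" "j \<le> n" "vsub \<gamma> \<beta> = vscale 2 (ev j)"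
  shows "root_ge n \<gamma> \<beta>"
proof -
  define c :: "nat \<Rightarrow> nat" where "c k = (if j \<le> k \<and> k < n then 2 else if k = n then 1 else 0)" for k
  have "(\<lambda>t. \<Sum>k\<in>{1..n}. real (c k) * simple_root n k t) = vscale 2 (ev j)"
  proof (rule ext)
    fix t
    have "(\<Sum>k\<in>{1..n}. real (c k) * simple_root n k t) =
      (\<Sum>k\<in>{1..n}. 2 * (if k \<in> {j..<n} then simple_root n k t else 0)) + (\<Sum>k\<in>{1..n}. if k = n then simple_root n k t else 0)"
      unfolding sum.distrib[symmetric] by (rule sum.cong) (auto simp: c_def)
    also have "(\<Sum>k\<in>{1..n}. 2 * (if k \<in> {j..<n} then simple_root n k t else 0)) = 2 * (\<Sum>k\<in>{1..n} \<inter> {j..<n}. simple_root n k t)"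
      by (simp add: sum.inter_restrict sum_distrib_left)
    also have "{1..n} \<inter> {j..<n} = {j..<n}" using assms by auto
    also have "(\<Sum>k\<in>{j..<n}. simple_root n k t) = vsub (ev j) (ev n) t"
      using fun_cong[OF telescope[of j n n], of t] assms by simp
    also have "(\<Sum>k\<in>{1..n}. if k = n then simple_root n k t else 0) = simple_root n n t"
      using assms by (subst sum.delta) auto
    finally show "(\<Sum>k\<in>{1..n}. real (c k) * simple_root n k t) = vscale 2 (ev j) t"
      by (simp add: simple_root_def vsub_def vscale_def ev_def)
  qed
  then show ?thesis unfolding root_ge_def using assms(3) by metis
qed

lemma hpos_sr: "k \<in> {1..n} \<Longrightarrow> hpos n (simple_root n k) \<ge> 1"
proof -
  assume k: "k \<in> {1..n}"
  show ?thesis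
  proof (cases "k < n")
    case True
    have "simple_root n k = sv 1 k (-1) (Suc k)" using True by (auto simp: fun_eq_iff simple_root_def sv_app vsub_def ev_def)
    then show ?thesis using k True by (simp add: hpos_sv wt_def)
  next
    case False
    then have "k = n" using k by simp
    have "simple_root n k = sv 1 n 1 n" using \<open>k = n\<close> by (auto simp: fun_eq_iff simple_root_def sv_app vscale_def ev_def)
    then show ?thesis using k \<open>k = n\<close> by (simp add: hpos_sv wt_def)
  qed
qed

lemma ge_hpos:
  assumes "root_ge n \<gamma> \<beta>" "\<gamma> \<noteq> \<beta>"
  shows "hpos n \<gamma> > hpos n \<beta>"
proof -
  obtain c where c: "vsub \<gamma> \<beta> = (\<lambda>j. \<Sum>i\<in>{1..n}. real (c i) * simple_root n i j)"
    using assms(1) unfolding root_ge_def by blast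
  have "hpos n (vsub \<gamma> \<beta>) = hpos n \<gamma> - hpos n \<beta>"
    by (simp add: hpos_def vsub_def algebra_simps sum_subtractf)
  moreover have "hpos n (vsub \<gamma> \<beta>) = (\<Sum>i\<in>{1..n}. real (c i) * hpos n (simple_root n i))"
    unfolding c hpos_def sum_distrib_left by (subst sum.swap) (simp add: mult.left_commute)
  moreover have "\<exists>i\<in>{1..n}. c i \<noteq> 0"
  proof (rule ccontr)
    assume "\<not> (\<exists>i\<in>{1..n}. c i \<noteq> 0)"
    then have "vsub \<gamma> \<beta> = (\<lambda>j. 0)" unfolding c by (auto intro!: ext sum.neutral)
    then have "\<gamma> = \<beta>" by (auto simp: fun_eq_iff vsub_def)
    then show False using assms(2) by simp
  qed
  then obtain i where i: "i \<in> {1..n}" "c i \<noteq> 0" by blast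
  have "real (c i) * hpos n (simple_root n i) \<le> (\<Sum>i\<in>{1..n}. real (c i) * hpos n (simple_root n i))"
  proof (rule member_le_sum)
    fix x assume x: "x \<in> {1..n} - {i}"
    have "hpos n (simple_root n x) \<ge> 1" using hpos_sr x by blast
    then show "0 \<le> real (c x) * hpos n (simple_root n x)" by simp
  qed (use i in auto)
  moreover have "real (c i) * hpos n (simple_root n i) > 0" using i hpos_sr[OF i(1)] by simp
  ultimately show ?thesis by linarith
qed

lemma roots_finite: "finite (roots_C n)"
proof -
  have "roots_C n \<subseteq> (\<lambda>(a, k, b, l). sv a k b l) ` ({1, -1} \<times> {1..n} \<times> {1, -1} \<times> {1..n})"
  proof
    fix x assume "x \<in> roots_C n"
    then obtain a k b l where xs: "x = sv a k b l" "a = 1 \<or> a = -1" "b = 1 \<or> b = -1"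
      "k \<in> {1..n}" "l \<in> {1..n}" unfolding roots_char by blast
    show "x \<in> (\<lambda>(a, k, b, l). sv a k b l) ` ({1, -1} \<times> {1..n} \<times> {1, -1} \<times> {1..n})"
      by (rule image_eqI[where x = "(a, k, b, l)"]) (use xs in simp_all)
  qed
  then show ?thesis by (rule finite_subset) simp
qed

lemma pos_finite: "finite (pos_roots_C n)"
  using roots_finite[of n] unfolding pos_char by simp

lemma sv_supp: "sv 1 i 1 j t \<noteq> 0 \<longleftrightarrow> t = i \<or> t = j"
  by (simp add: sv_app)

lemma sv_inj:
  assumes "sv 1 i 1 j = sv 1 a 1 b" "i \<le> j" "a \<le> b"
  shows "i = a \<and> j = b"
proof -
  have s: "\<And>t. (t = i \<or> t = j) \<longleftrightarrow> (t = a \<or> t = b)"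
    using assms(1) sv_supp by metis
  have 1: "i = a \<or> i = b" "j = a \<or> j = b" "a = i \<or> a = j" "b = i \<or> b = j"
    using s by blast+
  show ?thesis using 1 assms(2,3) by linarith
qed

lemma Iset_mem: "i \<le> j \<Longrightarrow> sv 1 i 1 j \<in> Iset n p \<rho> \<longleftrightarrow> condI n p \<rho> i j"
proof
  assume ij: "i \<le> j" and "sv 1 i 1 j \<in> Iset n p \<rho>"
  then obtain a b where ab: "sv 1 i 1 j = sv 1 a 1 b" "condI n p \<rho> a b" unfolding Iset_def by blast
  then have "a \<le> b" unfolding condI_def by auto
  then show "condI n p \<rho> i j" using sv_inj[OF ab(1) ij] ab(2) by simp
qed (auto simp: Iset_def)



lemma tau_order:
  assumes "u \<noteq> w" "\<not> (u \<in> {k, Suc k} \<and> w \<in> {k, Suc k})"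
  shows "tau k u < tau k w \<longleftrightarrow> u < w"
  using assms unfolding tau_def by (cases "u = k"; cases "u = Suc k"; cases "w = k"; cases "w = Suc k") auto

lemma swap_valid:
  assumes v: "valid n p \<rho>" and i0: "1 \<le> i0" "i0 \<le> p" and j0: "p < j0" "j0 \<le> n"
    and kk: "(\<rho> i0 = k \<and> \<rho> j0 = Suc k) \<or> (\<rho> i0 = Suc k \<and> \<rho> j0 = k)"
  shows "valid n p (tau k \<circ> \<rho>)"
    and "\<And>i j. 1 \<le> i \<Longrightarrow> i \<le> p \<Longrightarrow> p < j \<Longrightarrow> j \<le> n \<Longrightarrow>
      ((tau k \<circ> \<rho>) j < (tau k \<circ> \<rho>) i \<longleftrightarrow> (if i = i0 \<and> j = j0 then \<rho> i < \<rho> j else \<rho> j < \<rho> i))"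
proof -
  have pn: "p \<le> n" and b: "bij_betw \<rho> {1..n} {1..n}"
    and dec: "\<And>i j. 1 \<le> i \<Longrightarrow> i < j \<Longrightarrow> j \<le> p \<Longrightarrow> \<rho> j < \<rho> i"
    and inc: "\<And>i j. p < i \<Longrightarrow> i < j \<Longrightarrow> j \<le> n \<Longrightarrow> \<rho> i < \<rho> j"
    using v unfolding valid_def by auto
  have inj: "inj_on \<rho> {1..n}" using b unfolding bij_betw_def by simp
  have i0n: "i0 \<in> {1..n}" and j0n: "j0 \<in> {1..n}" using i0 j0 pn by auto
  have mem: "\<rho> x \<in> {k, Suc k} \<longleftrightarrow> x = i0 \<or> x = j0" if x: "x \<in> {1..n}" for x
  proof
    assume "\<rho> x \<in> {k, Suc k}"
    then have "\<rho> x = \<rho> i0 \<or> \<rho> x = \<rho> j0" using kk by auto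
    then show "x = i0 \<or> x = j0" using inj x i0n j0n by (auto dest: inj_onD)
  next
    assume "x = i0 \<or> x = j0" then show "\<rho> x \<in> {k, Suc k}" using kk by auto
  qed
  have neq: "\<rho> x \<noteq> \<rho> y" if "x \<in> {1..n}" "y \<in> {1..n}" "x \<noteq> y" for x y
    using inj that by (auto dest: inj_onD)
  have r: "\<rho> i0 \<in> {1..n}" "\<rho> j0 \<in> {1..n}" using bij_betwE[OF b] i0n j0n by blast+
  have k1: "1 \<le> k" "Suc k \<le> n" using kk r by auto
  show "valid n p (tau k \<circ> \<rho>)"
    unfolding valid_def
  proof (intro conjI allI impI)
    show "p \<le> n" by fact
    show "bij_betw (tau k \<circ> \<rho>) {1..n} {1..n}" using bij_betw_trans[OF b tau_bij[OF k1]] .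
  next
    fix i j assume a: "1 \<le> i \<and> i < j \<and> j \<le> p"
    then have x: "i \<in> {1..n}" "j \<in> {1..n}" "i \<noteq> j" "j \<noteq> j0" "i \<noteq> j0" using pn j0 by auto
    have "\<not> (\<rho> j \<in> {k, Suc k} \<and> \<rho> i \<in> {k, Suc k})" using mem[OF x(1)] mem[OF x(2)] x by auto
    then show "(tau k \<circ> \<rho>) j < (tau k \<circ> \<rho>) i"
      using tau_order[OF neq[OF x(2,1)] _] dec a x by auto
  next
    fix i j assume a: "p < i \<and> i < j \<and> j \<le> n"
    then have x: "i \<in> {1..n}" "j \<in> {1..n}" "i \<noteq> j" "j \<noteq> i0" "i \<noteq> i0" using i0 by auto
    have "\<not> (\<rho> i \<in> {k, Suc k} \<and> \<rho> j \<in> {k, Suc k})" using mem[OF x(1)] mem[OF x(2)] x by auto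
    then show "(tau k \<circ> \<rho>) i < (tau k \<circ> \<rho>) j"
      using tau_order[OF neq[OF x(1,2)] _] inc a x by auto
  qed
  fix i j assume a: "1 \<le> i" "i \<le> p" "p < j" "j \<le> n"
  then have x: "i \<in> {1..n}" "j \<in> {1..n}" "i \<noteq> j" using pn by auto
  show "(tau k \<circ> \<rho>) j < (tau k \<circ> \<rho>) i \<longleftrightarrow> (if i = i0 \<and> j = j0 then \<rho> i < \<rho> j else \<rho> j < \<rho> i)"
  proof (cases "i = i0 \<and> j = j0")
    case True
    then show ?thesis using kk by (auto simp: tau_def)
  next
    case False
    have "i \<noteq> j0" "j \<noteq> i0" using a i0 j0 by auto
    then have "\<not> (\<rho> j \<in> {k, Suc k} \<and> \<rho> i \<in> {k, Suc k})" using mem[OF x(1)] mem[OF x(2)] False by auto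
    then show ?thesis using tau_order[OF neq[OF x(2,1)] _] False by auto
  qed
qed

lemma Iset_swap:
  assumes v: "valid n p \<rho>" and i0: "1 \<le> i0" "i0 \<le> p" and j0: "p < j0" "j0 \<le> n"
    and kk: "\<rho> i0 = k" "\<rho> j0 = Suc k"
  shows "Iset n p (tau k \<circ> \<rho>) = Iset n p \<rho> \<union> {sv 1 i0 1 j0}"
proof -
  have kk': "(\<rho> i0 = k \<and> \<rho> j0 = Suc k) \<or> (\<rho> i0 = Suc k \<and> \<rho> j0 = k)" using kk by simp
  have c: "condI n p (tau k \<circ> \<rho>) i j \<longleftrightarrow> condI n p \<rho> i j \<or> (i = i0 \<and> j = j0)" for i j
    using swap_valid(2)[OF v i0 j0 kk', of i j] i0 j0 kk unfolding condI_def by auto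
  show ?thesis unfolding Iset_def c by blast
qed

lemma Iset_ext:
  assumes v: "valid n p \<rho>" and pn: "p < n" and lt: "\<forall>k\<in>{1..p}. \<rho> (Suc p) < \<rho> k"
  shows "valid n (Suc p) \<rho>" "Iset n (Suc p) \<rho> = Iset n p \<rho> \<union> {sv 1 (Suc p) 1 (Suc p)}"
proof -
  have b: "bij_betw \<rho> {1..n} {1..n}"
    and dec: "\<And>i j. 1 \<le> i \<Longrightarrow> i < j \<Longrightarrow> j \<le> p \<Longrightarrow> \<rho> j < \<rho> i"
    and inc: "\<And>i j. p < i \<Longrightarrow> i < j \<Longrightarrow> j \<le> n \<Longrightarrow> \<rho> i < \<rho> j"
    using v unfolding valid_def by auto
  show "valid n (Suc p) \<rho>"
    unfolding valid_def
  proof (intro conjI allI impI)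
    show "Suc p \<le> n" using pn by simp
    show "bij_betw \<rho> {1..n} {1..n}" by fact
  next
    fix i j assume a: "1 \<le> i \<and> i < j \<and> j \<le> Suc p"
    show "\<rho> j < \<rho> i"
    proof (cases "j = Suc p")
      case True then show ?thesis using lt a by auto
    next
      case False then show ?thesis using dec a by auto
    qed
  next
    fix i j assume "Suc p < i \<and> i < j \<and> j \<le> n" then show "\<rho> i < \<rho> j" using inc by auto
  qed
  have c: "condI n (Suc p) \<rho> i j \<longleftrightarrow> condI n p \<rho> i j \<or> (i = Suc p \<and> j = Suc p)" for i j
  proof
    assume "condI n (Suc p) \<rho> i j"
    then consider "1 \<le> i" "i \<le> j" "j \<le> Suc p" | "1 \<le> i" "i \<le> Suc p" "Suc p < j" "j \<le> n" "\<rho> j < \<rho> i"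
      unfolding condI_def by auto
    then show "condI n p \<rho> i j \<or> (i = Suc p \<and> j = Suc p)"
    proof cases
      case 1
      show ?thesis
      proof (cases "j = Suc p")
        case True
        show ?thesis
        proof (cases "i = Suc p")
          case False
          then have "i \<le> p" using 1 True by simp
          then show ?thesis using lt 1 True pn unfolding condI_def by auto
        qed (use True in simp)
      next
        case False then show ?thesis using 1 unfolding condI_def by auto
      qed
    next
      case 2
      show ?thesis
      proof (cases "i = Suc p")
        case True
        then have "\<rho> i < \<rho> j" using inc[of i j] 2 by auto
        then show ?thesis using 2 by simp
      next
        case False then show ?thesis using 2 unfolding condI_def by auto
      qed
    qed
  next
    assume "condI n p \<rho> i j \<or> (i = Suc p \<and> j = Suc p)"
    then show "condI n (Suc p) \<rho> i j" unfolding condI_def by auto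
  qed
  show "Iset n (Suc p) \<rho> = Iset n p \<rho> \<union> {sv 1 (Suc p) 1 (Suc p)}"
    unfolding Iset_def c by blast
qed



lemma sv_pos: "a \<in> {1..n} \<Longrightarrow> b \<in> {1..n} \<Longrightarrow> sv 1 a 1 b \<in> pos_roots_C n"
  unfolding pos_char using wt_pos[of a n] wt_pos[of b n]
  by (auto intro!: sv_in_roots simp: hpos_sv)

lemma ab_form:
  assumes ab: "abelian_ideal n I" and b: "\<beta> \<in> I"
  shows "\<exists>i j. 1 \<le> i \<and> i \<le> j \<and> j \<le> n \<and> \<beta> = sv 1 i 1 j"
proof -
  have "\<beta> \<in> pos_roots_C n" using ab b unfolding abelian_ideal_def by auto
  then consider (a) i j where "\<beta> = vsub (ev i) (ev j)" "1 \<le> i" "i < j" "j \<le> n"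
      | (b) i j where "\<beta> = vadd (ev i) (ev j)" "1 \<le> i" "i < j" "j \<le> n"
      | (d) i where "\<beta> = vscale 2 (ev i)" "i \<in> {1..n}"
      unfolding pos_roots_C_def by blast
  then show ?thesis
  proof cases
    case a
    have gp: "vadd (ev i) (ev j) \<in> pos_roots_C n" using a unfolding pos_roots_C_def by blast
    have eq: "vsub (vadd (ev i) (ev j)) \<beta> = vscale 2 (ev j)" using a by (auto simp: fun_eq_iff vsub_def vadd_def vscale_def ev_def)
    have "root_ge n (vadd (ev i) (ev j)) \<beta>" by (rule ge_witness2[OF _ _ eq]) (use a in auto)
    then have "vadd (ev i) (ev j) \<in> I" using ab b gp unfolding abelian_ideal_def by blast
    then have "vadd \<beta> (vadd (ev i) (ev j)) \<notin> roots_C n" using ab b unfolding abelian_ideal_def by blast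
    moreover have "vadd \<beta> (vadd (ev i) (ev j)) = vscale 2 (ev i)" using a by (auto simp: fun_eq_iff vsub_def vadd_def vscale_def ev_def)
    moreover have "vscale 2 (ev i) \<in> roots_C n" using a unfolding roots_C_def by auto
    ultimately show ?thesis by simp
  next
    case b
    then have "\<beta> = sv 1 i 1 j" by (auto simp: fun_eq_iff sv_app vadd_def ev_def)
    then show ?thesis using b by (intro exI[of _ i] exI[of _ j]) auto
  next
    case d
    then have "\<beta> = sv 1 i 1 i" by (auto simp: fun_eq_iff sv_app vscale_def ev_def)
    then show ?thesis using d by (intro exI[of _ i] exI[of _ i]) auto
  qed
qed

lemma vsub_sv1: "vsub (sv 1 a 1 b) (sv 1 c 1 b) = vsub (ev a) (ev c)"
  by (auto simp: fun_eq_iff vsub_def sv_app ev_def)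
lemma vsub_sv2: "vsub (sv 1 a 1 b) (sv 1 a 1 c) = vsub (ev b) (ev c)"
  by (auto simp: fun_eq_iff vsub_def sv_app ev_def)

lemma classify_step:
  assumes v: "valid n p \<rho>" and ij: "1 \<le> i" "i \<le> j" "j \<le> n"
    and nI: "\<not> condI n p \<rho> i j"
    and up: "\<And>a b. 1 \<le> a \<Longrightarrow> a \<le> b \<Longrightarrow> b \<le> n \<Longrightarrow> root_ge n (sv 1 a 1 b) (sv 1 i 1 j) \<Longrightarrow> (a, b) \<noteq> (i, j) \<Longrightarrow> condI n p \<rho> a b"
  shows "\<exists>p' \<rho>'. valid n p' \<rho>' \<and> Iset n p' \<rho>' = Iset n p \<rho> \<union> {sv 1 i 1 j}"
proof -
  have pn: "p \<le> n" and b: "bij_betw \<rho> {1..n} {1..n}"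
    and dec: "\<And>i j. 1 \<le> i \<Longrightarrow> i < j \<Longrightarrow> j \<le> p \<Longrightarrow> \<rho> j < \<rho> i"
    and inc: "\<And>i j. p < i \<Longrightarrow> i < j \<Longrightarrow> j \<le> n \<Longrightarrow> \<rho> i < \<rho> j"
    using v unfolding valid_def by auto
  have inj: "inj_on \<rho> {1..n}" using b unfolding bij_betw_def by simp
  have rimg: "\<rho> x \<in> {1..n}" if "x \<in> {1..n}" for x using bij_betwE[OF b] that by blast
  have rsurj: "\<exists>x\<in>{1..n}. \<rho> x = y" if "y \<in> {1..n}" for y
    using b that unfolding bij_betw_def by (metis imageE)
  have upA: "condI n p \<rho> (i - 1) j" if "2 \<le> i"
  proof (rule up)
    show "root_ge n (sv 1 (i - 1) 1 j) (sv 1 i 1 j)"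
      by (rule ge_witness[of "i - 1" i]) (use that ij in \<open>auto simp: vsub_sv1\<close>)
  qed (use that ij in auto)
  have upB: "condI n p \<rho> i (j - 1)" if "i < j"
  proof (rule up)
    show "root_ge n (sv 1 i 1 (j - 1)) (sv 1 i 1 j)"
      by (rule ge_witness[of "j - 1" j]) (use that ij in \<open>auto simp: vsub_sv2\<close>)
  qed (use that ij in auto)
  consider "j \<le> p" | "i \<le> p" "p < j" | "p < i" by linarith
  then show ?thesis
  proof cases
    case 1
    then have False using nI ij unfolding condI_def by auto
    then show ?thesis ..
  next
    case 2
    have ijn: "i \<in> {1..n}" "j \<in> {1..n}" using ij by auto
    have "\<rho> i \<noteq> \<rho> j" using inj ijn 2 by (auto dest: inj_onD)
    then have lt: "\<rho> i < \<rho> j" using nI 2 ij unfolding condI_def by auto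
    have F1: "\<rho> (j - 1) < \<rho> i" if "p < j - 1"
      using upB[of] that 2 unfolding condI_def by auto
    have F2: "\<rho> j < \<rho> (i - 1)" if "2 \<le> i"
      using upA that 2 unfolding condI_def by auto
    have sj: "\<rho> j = Suc (\<rho> i)"
    proof (rule ccontr)
      assume ne: "\<rho> j \<noteq> Suc (\<rho> i)"
      have "Suc (\<rho> i) \<in> {1..n}" using lt rimg[OF ijn(2)] by auto
      then obtain x where x: "x \<in> {1..n}" "\<rho> x = Suc (\<rho> i)" using rsurj by blast
      have xj: "x \<noteq> j" using x ne by auto
      have xi: "x \<noteq> i" using x by auto
      show False
      proof (cases "x \<le> p")
        case True
        show False
        proof (cases "x < i")
          case True
          then have "2 \<le> i" using x by auto
          have "\<rho> (i - 1) \<le> \<rho> x"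
          proof (cases "x = i - 1")
            case False
            then have "x < i - 1" using True by linarith
            moreover have "i - 1 \<le> p" using 2 by simp
            moreover have "1 \<le> x" using x by simp
            ultimately have "\<rho> (i - 1) < \<rho> x" using dec by blast
            then show ?thesis by simp
          qed simp
          then show False using F2[OF \<open>2 \<le> i\<close>] lt x ne by auto
        next
          case False
          then have "\<rho> x < \<rho> i" using dec[of i x] xi \<open>x \<le> p\<close> ij by auto
          then show False using x by simp
        qed
      next
        case False
        show False
        proof (cases "x < j")
          case True
          then have "p < j - 1" using False by auto
          have "\<rho> x \<le> \<rho> (j - 1)"
          proof (cases "x = j - 1")
            case False
            then have "x < j - 1" using True by linarith
            moreover have "j - 1 \<le> n" using ij by simp
            moreover have "p < x" using \<open>\<not> x \<le> p\<close> by simp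
            ultimately have "\<rho> x < \<rho> (j - 1)" using inc by blast
            then show ?thesis by simp
          qed simp
          then show False using F1[OF \<open>p < j - 1\<close>] x by auto
        next
          case False
          then have "\<rho> j < \<rho> x" using inc[of j x] xj x 2 by auto
          then show False using x lt ne by auto
        qed
      qed
    qed
    have "valid n p (tau (\<rho> i) \<circ> \<rho>)"
      using swap_valid(1)[OF v ij(1) 2(1) 2(2) ij(3), of "\<rho> i"] sj by simp
    moreover have "Iset n p (tau (\<rho> i) \<circ> \<rho>) = Iset n p \<rho> \<union> {sv 1 i 1 j}"
      using Iset_swap[OF v ij(1) 2(1) 2(2) ij(3) refl sj] .
    ultimately show ?thesis by blast
  next
    case 3
    have ji: "j = i"
    proof (rule ccontr)
      assume "j \<noteq> i" then have "i < j" using ij by simp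
      then show False using upB 3 unfolding condI_def by auto
    qed
    have ip: "i = Suc p"
    proof (rule ccontr)
      assume "i \<noteq> Suc p" then have "2 \<le> i" "Suc p < i" using 3 by auto
      then show False using upA ji unfolding condI_def by auto
    qed
    have lt: "\<forall>k\<in>{1..p}. \<rho> (Suc p) < \<rho> k"
    proof
      fix k assume k: "k \<in> {1..p}"
      have "condI n p \<rho> k (Suc p)"
      proof (rule up)
        show "root_ge n (sv 1 k 1 (Suc p)) (sv 1 i 1 j)"
          by (rule ge_witness[of k "Suc p"]) (use k ij ji ip in \<open>auto simp: vsub_sv1\<close>)
      qed (use k ij ji ip in auto)
      then show "\<rho> (Suc p) < \<rho> k" unfolding condI_def by auto
    qed
    have "p < n" using ij ip by simp
    then show ?thesis using Iset_ext[OF v _ lt] ji ip by blast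
  qed
qed

lemma classify_aux:
  assumes n: "1 \<le> n"
  shows "\<forall>I. abelian_ideal n I \<and> card I = N \<longrightarrow> (\<exists>p \<rho>. valid n p \<rho> \<and> I = Iset n p \<rho>)"
proof (induction N)
  case 0
  show ?case
  proof (intro allI impI)
    fix I assume a: "abelian_ideal n I \<and> card I = 0"
    have "finite I" using a pos_finite[of n] finite_subset unfolding abelian_ideal_def by blast
    then have "I = {}" using a by simp
    moreover have "valid n 0 id" by (simp add: valid_def)
    moreover have "Iset n 0 id = {}" by (simp add: Iset_def condI_def)
    ultimately show "\<exists>p \<rho>. valid n p \<rho> \<and> I = Iset n p \<rho>" by blast
  qed
next
  case (Suc N)
  show ?case
  proof (intro allI impI)
    fix I assume a: "abelian_ideal n I \<and> card I = Suc N"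
    then have ab: "abelian_ideal n I" and cI: "card I = Suc N" by auto
    have fin: "finite I" using ab pos_finite[of n] finite_subset unfolding abelian_ideal_def by blast
    have ne: "I \<noteq> {}" using cI by auto
    obtain m where m: "m \<in> hpos n ` I" "\<not> (\<exists>x\<in>hpos n ` I. x < m)"
      using ex_min_if_finite[of "hpos n ` I"] fin ne by blast
    then obtain \<beta> where \<beta>: "\<beta> \<in> I" "\<forall>x\<in>I. \<not> hpos n x < hpos n \<beta>" by auto
    define I' where "I' = I - {\<beta>}"
    have ab': "abelian_ideal n I'"
      unfolding abelian_ideal_def
    proof (intro conjI ballI impI)
      show "I' \<subseteq> pos_roots_C n" using ab unfolding I'_def abelian_ideal_def by auto
    next
      fix x \<gamma> assume x: "x \<in> I'" and g: "\<gamma> \<in> pos_roots_C n" and ge: "root_ge n \<gamma> x"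
      have "\<gamma> \<in> I" using ab x g ge unfolding I'_def abelian_ideal_def by blast
      moreover have "\<gamma> \<noteq> \<beta>"
      proof
        assume "\<gamma> = \<beta>"
        then have "hpos n \<beta> > hpos n x" using ge_hpos[OF ge] x unfolding I'_def by auto
        then show False using \<beta> x unfolding I'_def by auto
      qed
      ultimately show "\<gamma> \<in> I'" unfolding I'_def by simp
    next
      fix x y assume "x \<in> I'" "y \<in> I'"
      then show "vadd x y \<notin> roots_C n" using ab unfolding I'_def abelian_ideal_def by auto
    qed
    have "card I' = N" using cI \<beta>(1) fin unfolding I'_def by simp
    then obtain p \<rho> where v: "valid n p \<rho>" and I'e: "I' = Iset n p \<rho>" using Suc.IH ab' by blast
    obtain i j where ij: "1 \<le> i" "i \<le> j" "j \<le> n" "\<beta> = sv 1 i 1 j" using ab_form[OF ab \<beta>(1)] by blast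
    have nI: "\<not> condI n p \<rho> i j"
    proof
      assume "condI n p \<rho> i j"
      then have "\<beta> \<in> I'" using I'e ij Iset_mem by simp
      then show False unfolding I'_def by simp
    qed
    have up: "condI n p \<rho> a b" if "1 \<le> a" "a \<le> b" "b \<le> n" "root_ge n (sv 1 a 1 b) (sv 1 i 1 j)" "(a, b) \<noteq> (i, j)" for a b
    proof -
      have "sv 1 a 1 b \<in> pos_roots_C n" using sv_pos that by auto
      then have "sv 1 a 1 b \<in> I" using ab \<beta>(1) ij(4) that(4) unfolding abelian_ideal_def by blast
      moreover have "sv 1 a 1 b \<noteq> \<beta>" using sv_inj[of a b i j] that ij by auto
      ultimately have "sv 1 a 1 b \<in> Iset n p \<rho>" using I'e unfolding I'_def by blast
      then show ?thesis using Iset_mem that by blast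
    qed
    obtain p' \<rho>' where "valid n p' \<rho>'" "Iset n p' \<rho>' = Iset n p \<rho> \<union> {sv 1 i 1 j}"
      using classify_step[OF v ij(1,2,3) nI up] by blast
    moreover have "I = I' \<union> {\<beta>}" using \<beta>(1) unfolding I'_def by blast
    ultimately show "\<exists>p \<rho>. valid n p \<rho> \<and> I = Iset n p \<rho>" using I'e ij(4) by auto
  qed
qed

lemma classify: "1 \<le> n \<Longrightarrow> abelian_ideal n I \<Longrightarrow> \<exists>p \<rho>. valid n p \<rho> \<and> I = Iset n p \<rho>"
  using classify_aux by blast



lemma final_arith:
  assumes v: "valid n p \<rho>" and n: "2 \<le> n"
  shows "(1 \<le> p \<and> \<rho> 1 = n) \<longleftrightarrow> condI n p \<rho> 1 n"
proof -
  have pn: "p \<le> n" and b: "bij_betw \<rho> {1..n} {1..n}"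
    and dec: "\<And>i j. 1 \<le> i \<Longrightarrow> i < j \<Longrightarrow> j \<le> p \<Longrightarrow> \<rho> j < \<rho> i"
    and inc: "\<And>i j. p < i \<Longrightarrow> i < j \<Longrightarrow> j \<le> n \<Longrightarrow> \<rho> i < \<rho> j"
    using v unfolding valid_def by auto
  have inj: "inj_on \<rho> {1..n}" using b unfolding bij_betw_def by simp
  have rimg: "\<rho> x \<in> {1..n}" if "x \<in> {1..n}" for x using bij_betwE[OF b] that by blast
  obtain x where x: "x \<in> {1..n}" "\<rho> x = n"
    using b n unfolding bij_betw_def by (metis atLeastAtMost_iff imageE le_trans one_le_numeral order_refl)
  have r1: "\<rho> 1 \<le> n" "\<rho> n \<le> n" using rimg[of 1] rimg[of n] n by auto
  show ?thesis
  proof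
    assume a: "1 \<le> p \<and> \<rho> 1 = n"
    show "condI n p \<rho> 1 n"
    proof (cases "n \<le> p")
      case True then show ?thesis unfolding condI_def using a n by auto
    next
      case False
      have "\<rho> n \<noteq> \<rho> 1" using inj n by (auto dest: inj_onD)
      then have "\<rho> n < \<rho> 1" using a r1 by auto
      then show ?thesis unfolding condI_def using a False by auto
    qed
  next
    assume c: "condI n p \<rho> 1 n"
    have p1: "1 \<le> p" using c unfolding condI_def by auto
    have "x = 1"
    proof (rule ccontr)
      assume x1: "x \<noteq> 1"
      show False
      proof (cases "x \<le> p")
        case True
        then have "\<rho> x < \<rho> 1" using dec[of 1 x] x x1 by auto
        then show False using x r1 by simp
      next
        case False
        then have np: "\<not> n \<le> p" using x by auto
        then have lt: "\<rho> n < \<rho> 1" using c unfolding condI_def by auto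
        show False
        proof (cases "x = n")
          case True then show False using lt x r1 by simp
        next
          case False
          then have "\<rho> x < \<rho> n" using inc[of x n] x \<open>\<not> x \<le> p\<close> by auto
          then show False using lt x r1 by simp
        qed
      qed
    qed
    then show "1 \<le> p \<and> \<rho> 1 = n" using x p1 by simp
  qed
qed

theorem proposition8p1:
  fixes n :: nat and I :: "vec set"
  assumes "n \<ge> 2" and "abelian_ideal n I"
  shows "I \<in> I_ab n (simple_root n n) \<longleftrightarrow> alpha_1n n \<in> I"
proof -
  have n1: "1 \<le> n" using assms(1) by simp
  obtain p \<rho> where v: "valid n p \<rho>" and Ie: "I = Iset n p \<rho>" using classify[OF n1 assms(2)] by blast
  define E where "E = EE n p \<rho>"
  have Ew: "E \<in> aff_weyl n" unfolding E_def using EE_weyl[OF n1 v] .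
  define w0 where "w0 = inv E"
  have w0w: "w0 \<in> aff_weyl n" unfolding w0_def using aff_weyl_inv[OF Ew n1] .
  have bE: "bij E" using aff_weyl_bij[OF Ew n1] .
  have iw0: "inv w0 = E" unfolding w0_def using inv_inv_eq[OF bE] .
  have inv0: "inv_set n w0 = {(vneg \<beta>, 1) | \<beta>. \<beta> \<in> I}"
    unfolding inv_set_def iw0 E_def Ie using EE_invset[OF v n1] by simp
  have wI: "w_ideal n I = w0"
    unfolding w_ideal_def
  proof (rule the_equality)
    show "w0 \<in> aff_weyl n \<and> inv_set n w0 = {(vneg \<beta>, 1) | \<beta>. \<beta> \<in> I}" using w0w inv0 by simp
  next
    fix w assume "w \<in> aff_weyl n \<and> inv_set n w = {(vneg \<beta>, 1) | \<beta>. \<beta> \<in> I}"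
    then show "w = w0" using unique_w[OF n1 _ w0w] inv0 by auto
  qed
  have th: "vneg (theta_C n) = sv (-1) 1 (-1) 1"
    using theta_eq[OF n1] by (auto simp: fun_eq_iff vneg_def vscale_def sv_app ev_def)
  have one: "(1::nat) \<in> {1..n}" using n1 by simp
  have Ev: "inv (w_ideal n I) (vneg (theta_C n), 2) = (sv (- sg p 1) (\<rho> 1) (- sg p 1) (\<rho> 1), 2 - mp p 1 - mp p 1)"
    unfolding wI iw0 E_def th using EE_sv[OF v one one, of "-1" "-1" 2] by simp
  have sr: "simple_root n n = sv 1 n 1 n" by (auto simp: fun_eq_iff simple_root_def sv_app vscale_def ev_def)
  have "I \<in> I_ab n (simple_root n n) \<longleftrightarrow> (sv (- sg p 1) (\<rho> 1) (- sg p 1) (\<rho> 1), 2 - mp p 1 - mp p 1) = (sv 1 n 1 n, 0)"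
    using assms(2) by (simp add: I_ab_def Ev sr)
  also have "\<dots> \<longleftrightarrow> 1 \<le> p \<and> \<rho> 1 = n"
  proof (cases "1 \<le> p")
    case True
    then have "sg p 1 = -1" "mp p 1 = 1" by (auto simp: sg_def mp_def)
    then show ?thesis using True sv_inj[of "\<rho> 1" "\<rho> 1" n n] by auto
  next
    case False
    then show ?thesis by (simp add: mp_def)
  qed
  also have "\<dots> \<longleftrightarrow> condI n p \<rho> 1 n" using final_arith[OF v assms(1)] .
  also have "\<dots> \<longleftrightarrow> alpha_1n n \<in> I" unfolding Ie alpha1n_eq[OF n1] using Iset_mem[of 1 n] n1 by simp
  finally show ?thesis .
qed


end
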